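(* For $g_1,g_2>0$ and $\sigma_1,\sigma_2>0$ let $p_i(m)=\frac{1}{\sqrt{2\pi}\sigma_i}e^{-m^2/(2\sigma_i^2)}$ and define the qubit dynamical maps $$\Lambda^{(12)}_t[\rho]=\iint dm_1dm_2\,p_1(m_1)p_2(m_2)\,e^{-\mathrm iK t}\rho\, e^{\mathrm iKt},\quad K=\tfrac12(g_1m_1\sigma_z+g_2m_2\sigma_x),$$ $\Lambda^{(1)}_t[\rho]=\int dm_1\,p_1(m_1)e^{-\mathrm i g_1m_1t\sigma_z/2}\rho e^{\mathrm i g_1m_1t\sigma_z/2}$ and $\Lambda^{(2)}_t[\rho]=\int dm_2\,p_2(m_2)e^{-\mathrm i g_2m_2t\sigma_x/2}\rho e^{\mathrm i g_2m_2t\sigma_x/2}$, with generators $\mathcal L^{(\mathsf x)}_t=\dot\Lambda^{(\mathsf x)}_t\circ(\Lambda^{(\mathsf x)}_t)^{-1}$. Then there exist parameters $g_1,g_2,\sigma_1,\sigma_2$ and a time $t>0$ at which all three maps are invertible and $\mathcal L^{(12)}_t\neq\mathcal L^{(1)}_t+\mathcal L^{(2)}_t$. Consequently, commutativity of each interaction Hamiltonian with the system Hamiltonian and with all environment Hamiltonians (but not with each other) does not suffice for the addition of single-environment generators to reproduce the true dynamics.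
   Context: This is the reduced qubit dynamics of a qubit coupled to two magnets (environments with vanishing free Hamiltonian, in the infinite-size limit with Gaussian magnetisation distributions) with $H_S=H_{E_1}=H_{E_2}=0$, $H_{I_1}=\frac12g_1\sigma_z\otimes\hat m_1$, $H_{I_2}=\frac12 g_2\sigma_x\otimes\hat m_2$; $\Lambda^{(1)}$, $\Lambda^{(2)}$ are the dynamics with only one magnet present. Here all interaction Hamiltonians commute with $H_S$ and with the environment Hamiltonians, but $[H_{I_1},H_{I_2}]\ne0$. *)

theory Defs
  imports "HOL-Analysis.Analysis"
begin

type_synonym qmat = "complex^2^2"

definition cscale :: "complex \<Rightarrow> qmat \<Rightarrow> qmat" where
  "cscale c A = (\<chi> i j. c * A$i$j)"

definition sigma_z :: qmat where
  "sigma_z = (\<chi> i j. if i = j then (if i = 1 then 1 else -1) else 0)"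

definition sigma_x :: qmat where
  "sigma_x = (\<chi> i j. if i = j then 0 else 1)"

definition mpow :: "qmat \<Rightarrow> nat \<Rightarrow> qmat" where
  "mpow A n = (((**) A) ^^ n) (mat 1)"

definition mexp :: "qmat \<Rightarrow> qmat" where
  "mexp A = (\<Sum>n. (1 / fact n) *\<^sub>R mpow A n)"

definition gauss :: "real \<Rightarrow> real \<Rightarrow> real" where
  "gauss s m = exp (- (m\<^sup>2) / (2 * s\<^sup>2)) / (sqrt (2 * pi) * s)"

definition evolve :: "qmat \<Rightarrow> real \<Rightarrow> qmat \<Rightarrow> qmat" where
  "evolve H t \<rho> = mexp (cscale (- \<i> * of_real t) H) ** \<rho> ** mexp (cscale (\<i> * of_real t) H)"

definition Lam12 :: "real \<Rightarrow> real \<Rightarrow> real \<Rightarrow> real \<Rightarrow> real \<Rightarrow> qmat \<Rightarrow> qmat" where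
  "Lam12 g1 g2 s1 s2 t \<rho> =
     (LINT m1|lborel. LINT m2|lborel.
        (gauss s1 m1 * gauss s2 m2) *\<^sub>R
          evolve ((1/2) *\<^sub>R ((g1 * m1) *\<^sub>R sigma_z + (g2 * m2) *\<^sub>R sigma_x)) t \<rho>)"

definition Lam1 :: "real \<Rightarrow> real \<Rightarrow> real \<Rightarrow> qmat \<Rightarrow> qmat" where
  "Lam1 g1 s1 t \<rho> =
     (LINT m1|lborel. gauss s1 m1 *\<^sub>R evolve ((1/2) *\<^sub>R ((g1 * m1) *\<^sub>R sigma_z)) t \<rho>)"

definition Lam2 :: "real \<Rightarrow> real \<Rightarrow> real \<Rightarrow> qmat \<Rightarrow> qmat" where
  "Lam2 g2 s2 t \<rho> =
     (LINT m2|lborel. gauss s2 m2 *\<^sub>R evolve ((1/2) *\<^sub>R ((g2 * m2) *\<^sub>R sigma_x)) t \<rho>)"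

definition generator :: "(real \<Rightarrow> qmat \<Rightarrow> qmat) \<Rightarrow> real \<Rightarrow> qmat \<Rightarrow> qmat" where
  "generator \<Lambda> t \<rho> = vector_derivative (\<lambda>s. \<Lambda> s (inv (\<Lambda> t) \<rho>)) (at t)"

definition regular_at :: "(real \<Rightarrow> qmat \<Rightarrow> qmat) \<Rightarrow> real \<Rightarrow> bool" where
  "regular_at \<Lambda> t \<longleftrightarrow> bij (\<Lambda> t) \<and> (\<forall>\<rho>. (\<lambda>s. \<Lambda> s \<rho>) differentiable (at t))"

end

theory Submission
  imports Defs "HOL-Probability.Probability"
begin

definition snc :: "real \<Rightarrow> real" where "snc x = (if x = 0 then 1 else sin x / x)"

lemma mpow_Suc: "mpow A (Suc n) = A ** mpow A n"
  by (simp add: mpow_def)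

lemma mpow_0: "mpow A 0 = mat 1"
  by (simp add: mpow_def)

lemma mm_uminus_right: "A ** (- B) = - (A ** (B::qmat))"
  by (simp add: matrix_matrix_mult_def vec_eq_iff sum_negf)

lemma mpow_sq:
  assumes AA: "A ** A = (- (x\<^sup>2)) *\<^sub>R mat 1"
  shows "mpow A (2*k) = ((- (x\<^sup>2))^k) *\<^sub>R mat 1 \<and> mpow A (2*k+1) = ((- (x\<^sup>2))^k) *\<^sub>R A"
proof (induction k)
  case 0 then show ?case by (simp add: mpow_0 mpow_Suc)
next
  case (Suc k)
  have e: "mpow A (2 * Suc k) = A ** (A ** mpow A (2*k))"
    by (simp add: mpow_Suc)
  have "mpow A (2 * Suc k) = ((- (x\<^sup>2))^Suc k) *\<^sub>R mat 1"
    unfolding e using Suc.IH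
    by (simp add: matrix_scalar_ac matrix_mul_assoc AA scalar_matrix_assoc[symmetric])
  moreover have "mpow A (2 * Suc k + 1) = A ** mpow A (2 * Suc k)"
    by (simp add: mpow_Suc)
  ultimately show ?case by (simp add: matrix_scalar_ac mm_uminus_right)
qed

lemma mpow_coeff:
  assumes AA: "A ** A = (- (x\<^sup>2)) *\<^sub>R mat 1"
  shows "(1 / fact n) *\<^sub>R mpow A n = (cos_coeff n * x^n) *\<^sub>R mat 1 + (sin_coeff n * x^(n-1)) *\<^sub>R A"
proof (cases "even n")
  case True
  then obtain k where k: "n = 2*k" by (auto elim: evenE)
  have "(- (x\<^sup>2))^k = (-1)^k * x^(2*k)"
    by (metis mult_minus1 power_mult power_mult_distrib)
  then show ?thesis using mpow_sq[OF AA, of k] k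
    by (simp add: cos_coeff_def sin_coeff_def)
next
  case False
  then obtain k where k: "n = 2*k+1" by (auto elim: oddE)
  have "(- (x\<^sup>2))^k = (-1)^k * x^(2*k)"
    by (metis mult_minus1 power_mult power_mult_distrib)
  then show ?thesis using mpow_sq[OF AA, of k] k
    by (simp add: cos_coeff_def sin_coeff_def)
qed

lemma snc_sums: "(\<lambda>n. sin_coeff n * x^(n-1)) sums snc x"
proof (cases "x = 0")
  case True
  have "(\<lambda>n. sin_coeff n * x^(n-1)) = (\<lambda>n. if n = 1 then 1 else 0)"
    using True by (auto simp: sin_coeff_def fun_eq_iff elim!: oddE)
  then show ?thesis using sums_single[of 1 "\<lambda>_. 1::real"] True by (simp add: snc_def)
next
  case False
  have "(\<lambda>n. sin_coeff n * x^n / x) sums (sin x / x)"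
    using sums_divide[OF sin_converges[of x]] by simp
  moreover have "(\<lambda>n. sin_coeff n * x^n / x) = (\<lambda>n. sin_coeff n * x^(n-1))"
  proof
    fix n show "sin_coeff n * x^n / x = sin_coeff n * x^(n-1)"
      using False by (cases n) (auto simp: sin_coeff_def)
  qed
  ultimately show ?thesis using False by (simp add: snc_def)
qed

lemma mexp_sq:
  assumes AA: "A ** A = (- (x\<^sup>2)) *\<^sub>R mat 1"
  shows "mexp A = cos x *\<^sub>R mat 1 + snc x *\<^sub>R A"
proof -
  have "(\<lambda>n. (cos_coeff n * x^n) *\<^sub>R mat 1 + (sin_coeff n * x^(n-1)) *\<^sub>R A) sums (cos x *\<^sub>R mat 1 + snc x *\<^sub>R (A::qmat))"
    apply (rule sums_add)
     apply (rule sums_scaleR_left) using cos_converges[of x] apply simp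
    apply (rule sums_scaleR_left) using snc_sums[of x] apply simp
    done
  then have "(\<lambda>n. (1 / fact n) *\<^sub>R mpow A n) sums (cos x *\<^sub>R mat 1 + snc x *\<^sub>R A)"
    by (simp add: mpow_coeff[OF AA])
  then show ?thesis unfolding mexp_def by (rule sums_unique[symmetric])
qed

definition Nm :: "real \<Rightarrow> real \<Rightarrow> qmat" where "Nm a b = a *\<^sub>R sigma_z + b *\<^sub>R sigma_x"
definition Zm :: "qmat \<Rightarrow> qmat" where "Zm \<rho> = sigma_z ** \<rho> ** sigma_z"
definition Xm :: "qmat \<Rightarrow> qmat" where "Xm \<rho> = sigma_x ** \<rho> ** sigma_x"
definition Ym :: "qmat \<Rightarrow> qmat" where "Ym \<rho> = sigma_z ** \<rho> ** sigma_x + sigma_x ** \<rho> ** sigma_z"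
definition Cz :: "qmat \<Rightarrow> qmat" where "Cz \<rho> = cscale (- \<i>) (sigma_z ** \<rho> - \<rho> ** sigma_z)"
definition Cx :: "qmat \<Rightarrow> qmat" where "Cx \<rho> = cscale (- \<i>) (sigma_x ** \<rho> - \<rho> ** sigma_x)"

lemma sc_comp: "(c *\<^sub>R (A::qmat)) $ i $ j = c *\<^sub>R A $ i $ j"
  by simp

lemma cplx_scaleR: "c *\<^sub>R (z::complex) = complex_of_real c * z"
  by (simp add: scaleR_conv_of_real)

lemmas mdefs = sc_comp vec_eq_iff forall_2 matrix_matrix_mult_def sum_2 sigma_z_def sigma_x_def mat_def cscale_def Nm_def

lemma MM: "cscale (- \<i> * of_real s) ((1/2) *\<^sub>R Nm a b) ** cscale (- \<i> * of_real s) ((1/2) *\<^sub>R Nm a b)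
   = (- ((s * sqrt (a\<^sup>2 + b\<^sup>2) / 2)\<^sup>2)) *\<^sub>R mat 1"
proof -
  have "(s * sqrt (a\<^sup>2 + b\<^sup>2) / 2)\<^sup>2 = s^2 * (a^2+b^2) / 4"
    by (simp add: power_mult_distrib power_divide)
  then show ?thesis
    by (simp add: mdefs; simp add: cplx_scaleR power2_eq_square field_simps; simp add: algebra_simps)
qed

lemma Mneg: "cscale (\<i> * of_real s) H = - cscale (- \<i> * of_real s) H"
  by (simp add: cscale_def vec_eq_iff)

lemma MM': "(- A) ** (- A) = A ** (A::qmat)"
  by (simp add: matrix_matrix_mult_def vec_eq_iff sum_negf)

lemma evolve_formula:
  fixes a b s :: real
  defines "\<phi> \<equiv> s * sqrt (a\<^sup>2 + b\<^sup>2) / 2"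
  defines "c1 \<equiv> s / 2 * cos \<phi> * snc \<phi>"
  defines "c2 \<equiv> s\<^sup>2 / 4 * (snc \<phi>)\<^sup>2"
  shows "evolve ((1/2) *\<^sub>R Nm a b) s \<rho> =
    (cos \<phi>)\<^sup>2 *\<^sub>R \<rho> + (c1 * a) *\<^sub>R Cz \<rho> + (c1 * b) *\<^sub>R Cx \<rho>
    + (c2 * a\<^sup>2) *\<^sub>R Zm \<rho> + (c2 * b\<^sup>2) *\<^sub>R Xm \<rho> + (c2 * a * b) *\<^sub>R Ym \<rho>"
proof -
  define M where "M = cscale (- \<i> * of_real s) ((1/2) *\<^sub>R Nm a b)"
  have U: "mexp M = cos \<phi> *\<^sub>R mat 1 + snc \<phi> *\<^sub>R M"
    unfolding M_def \<phi>_def by (rule mexp_sq) (rule MM)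
  have V: "mexp (- M) = cos \<phi> *\<^sub>R mat 1 + snc \<phi> *\<^sub>R (- M)"
    unfolding M_def \<phi>_def by (rule mexp_sq) (simp only: MM' MM)
  have e: "evolve ((1/2) *\<^sub>R Nm a b) s \<rho> = mexp M ** \<rho> ** mexp (- M)"
    unfolding evolve_def M_def by (simp add: Mneg)
  show ?thesis unfolding e U V unfolding M_def c1_def c2_def Cz_def Cx_def Zm_def Xm_def Ym_def
    by (simp add: mdefs; simp add: cplx_scaleR power2_eq_square field_simps; algebra)
qed

lemma gauss1: "gauss 1 x = std_normal_density x"
  by (simp add: gauss_def std_normal_density_def)

lemma gauss1_fun: "gauss 1 = std_normal_density"
  using gauss1 by auto

lemma gauss_nonneg: "0 \<le> gauss 1 x"
  by (simp add: gauss1 normal_density_nonneg)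

lemma gauss_meas[measurable]: "gauss 1 \<in> borel_measurable borel"
  by (simp add: gauss1_fun)

lemma gi: "integrable lborel (\<lambda>x. gauss 1 x * x^k)"
  by (simp add: gauss1_fun integrable_std_normal_moment)

lemma gi0: "integrable lborel (\<lambda>x. gauss 1 x)"
  using gi[of 0] by simp

lemma E0: "(LINT x|lborel. gauss 1 x) = 1"
  by (simp add: gauss1_fun)

lemma E2: "(LINT x|lborel. gauss 1 x * x^2) = 1"
  using integral_std_normal_moment_even[of 1] by (simp add: gauss1_fun)

lemma E4: "(LINT x|lborel. gauss 1 x * x^4) = 3"
  using integral_std_normal_moment_even[of 2] by (simp add: gauss1_fun fact_numeral)

lemma odd_int0:
  fixes f :: "real \<Rightarrow> real"
  assumes [measurable]: "f \<in> borel_measurable borel" and od: "\<And>x. f (- x) = - f x"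
  shows "(LINT x|lborel. f x) = 0"
proof -
  have "(LINT x|lborel. f x) = (LINT x|distr lborel borel uminus. f x)"
    by (simp add: lborel_distr_uminus)
  also have "\<dots> = (LINT x|lborel. f (- x))"
    by (rule integral_distr) auto
  also have "\<dots> = - (LINT x|lborel. f x)" by (simp add: od)
  finally show ?thesis by simp
qed

definition pb :: "(real \<Rightarrow> real \<Rightarrow> real) \<Rightarrow> bool" where
  "pb w \<longleftrightarrow> (\<lambda>p. w (fst p) (snd p)) \<in> borel_measurable borel \<and> (\<exists>C. \<forall>x y. \<bar>w x y\<bar> \<le> C * (1 + x^4 + y^4))"

lemma pb_meas2:
  assumes "pb w" shows "(\<lambda>(x, y). w x y) \<in> borel_measurable (lborel \<Otimes>\<^sub>M lborel)"
proof -
  have "(\<lambda>p. w (fst p) (snd p)) \<in> borel_measurable borel" using assms by (simp add: pb_def)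
  then show ?thesis by (simp add: lborel_prod case_prod_beta')
qed

lemma pb_meas1:
  assumes "pb w" shows "w x \<in> borel_measurable borel"
proof -
  have "(\<lambda>y. (\<lambda>p. w (fst p) (snd p)) (x, y)) \<in> borel_measurable borel"
    apply (rule measurable_compose[OF borel_measurable_continuous_onI[of "\<lambda>y. (x,y)"]])
     apply (intro continuous_intros)
    using assms unfolding pb_def by simp
  then show ?thesis by simp
qed

lemma inner_int:
  assumes "pb w" shows "integrable lborel (\<lambda>y. gauss 1 x * gauss 1 y * w x y)"
proof -
  obtain C where C: "\<And>x y. \<bar>w x y\<bar> \<le> C * (1 + x^4 + y^4)" using assms by (auto simp: pb_def)
  have [measurable]: "w x \<in> borel_measurable borel" by (rule pb_meas1[OF assms])
  show ?thesis
  proof (rule Bochner_Integration.integrable_bound)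
    show "integrable lborel (\<lambda>y. gauss 1 x * C * (1 + x^4) * gauss 1 y + gauss 1 x * C * (gauss 1 y * y^4))"
      using gi[of 4] gi0 by auto
    show "(\<lambda>y. gauss 1 x * gauss 1 y * w x y) \<in> borel_measurable lborel" by measurable
    show "AE y in lborel. norm (gauss 1 x * gauss 1 y * w x y) \<le> norm (gauss 1 x * C * (1 + x^4) * gauss 1 y + gauss 1 x * C * (gauss 1 y * y^4))"
    proof (rule AE_I2)
      fix y
      have "\<bar>gauss 1 x * gauss 1 y * w x y\<bar> = gauss 1 x * gauss 1 y * \<bar>w x y\<bar>"
        using gauss_nonneg by (simp add: abs_mult)
      also have "\<dots> \<le> gauss 1 x * gauss 1 y * (C * (1 + x^4 + y^4))"
        using C gauss_nonneg by (intro mult_left_mono) auto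
      also have "\<dots> = gauss 1 x * C * (1 + x^4) * gauss 1 y + gauss 1 x * C * (gauss 1 y * y^4)"
        by (simp add: algebra_simps)
      finally show "norm (gauss 1 x * gauss 1 y * w x y) \<le> norm (gauss 1 x * C * (1 + x^4) * gauss 1 y + gauss 1 x * C * (gauss 1 y * y^4))"
        by simp
    qed
  qed
qed

lemma inner_meas:
  assumes "pb w" shows "(\<lambda>x. LINT y|lborel. gauss 1 x * gauss 1 y * w x y) \<in> borel_measurable borel"
proof -
  have [measurable]: "(\<lambda>(x, y). w x y) \<in> borel_measurable (lborel \<Otimes>\<^sub>M lborel)" by (rule pb_meas2[OF assms])
  have "(\<lambda>x. LINT y|lborel. gauss 1 x * gauss 1 y * w x y) \<in> borel_measurable lborel"
    by measurable
  then show ?thesis by simp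
qed

lemma inner_bound:
  assumes "pb w" "\<And>x y. \<bar>w x y\<bar> \<le> C * (1 + x^4 + y^4)"
  shows "\<bar>LINT y|lborel. gauss 1 x * gauss 1 y * w x y\<bar> \<le> gauss 1 x * C * (4 + x^4)"
proof -
  have i1: "integrable lborel (\<lambda>y. gauss 1 x * C * (1 + x^4) * gauss 1 y + gauss 1 x * C * (gauss 1 y * y^4))"
    using gi[of 4] gi0 by auto
  have "\<bar>LINT y|lborel. gauss 1 x * gauss 1 y * w x y\<bar> \<le> (LINT y|lborel. gauss 1 x * C * (1 + x^4) * gauss 1 y + gauss 1 x * C * (gauss 1 y * y^4))"
  proof (rule integral_abs_bound_integral)
    show "integrable lborel (\<lambda>y. gauss 1 x * gauss 1 y * w x y)" by (rule inner_int[OF assms(1)])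
    show "integrable lborel (\<lambda>y. gauss 1 x * C * (1 + x^4) * gauss 1 y + gauss 1 x * C * (gauss 1 y * y^4))" by (rule i1)
    fix y
    have "\<bar>gauss 1 x * gauss 1 y * w x y\<bar> = gauss 1 x * gauss 1 y * \<bar>w x y\<bar>"
      using gauss_nonneg by (simp add: abs_mult)
    also have "\<dots> \<le> gauss 1 x * gauss 1 y * (C * (1 + x^4 + y^4))"
      using assms(2) gauss_nonneg by (intro mult_left_mono) auto
    also have "\<dots> = gauss 1 x * C * (1 + x^4) * gauss 1 y + gauss 1 x * C * (gauss 1 y * y^4)"
      by (simp add: algebra_simps)
    finally show "\<bar>gauss 1 x * gauss 1 y * w x y\<bar> \<le> gauss 1 x * C * (1 + x^4) * gauss 1 y + gauss 1 x * C * (gauss 1 y * y^4)" .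
  qed
  also have "\<dots> = gauss 1 x * C * (1 + x^4) * (LINT y|lborel. gauss 1 y) + gauss 1 x * C * (LINT y|lborel. gauss 1 y * y^4)"
    by (subst Bochner_Integration.integral_add) (use gi[of 4] gi0 in auto)
  also have "\<dots> = gauss 1 x * C * (4 + x^4)"
    by (simp add: E0 E4 algebra_simps)
  finally show ?thesis .
qed

lemma outer_int:
  assumes "pb w" shows "integrable lborel (\<lambda>x. LINT y|lborel. gauss 1 x * gauss 1 y * w x y)"
proof -
  obtain C where C: "\<And>x y. \<bar>w x y\<bar> \<le> C * (1 + x^4 + y^4)" using assms by (auto simp: pb_def)
  show ?thesis
  proof (rule Bochner_Integration.integrable_bound)
    show "integrable lborel (\<lambda>x. C * 4 * gauss 1 x + C * (gauss 1 x * x^4))"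
      using gi[of 4] gi0 by auto
    show "(\<lambda>x. LINT y|lborel. gauss 1 x * gauss 1 y * w x y) \<in> borel_measurable lborel"
      using inner_meas[OF assms] by simp
    show "AE x in lborel. norm (LINT y|lborel. gauss 1 x * gauss 1 y * w x y) \<le> norm (C * 4 * gauss 1 x + C * (gauss 1 x * x^4))"
    proof (rule AE_I2)
      fix x
      have "\<bar>LINT y|lborel. gauss 1 x * gauss 1 y * w x y\<bar> \<le> gauss 1 x * C * (4 + x^4)"
        by (rule inner_bound[OF assms C])
      also have "\<dots> = C * 4 * gauss 1 x + C * (gauss 1 x * x^4)" by (simp add: algebra_simps)
      finally show "norm (LINT y|lborel. gauss 1 x * gauss 1 y * w x y) \<le> norm (C * 4 * gauss 1 x + C * (gauss 1 x * x^4))"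
        by simp
    qed
  qed
qed

definition D2 :: "(real \<Rightarrow> real \<Rightarrow> real) \<Rightarrow> real" where
  "D2 w = (LINT x|lborel. LINT y|lborel. gauss 1 x * gauss 1 y * w x y)"

definition V2 :: "(real \<Rightarrow> real \<Rightarrow> qmat) \<Rightarrow> qmat" where
  "V2 F = (LINT x|lborel. LINT y|lborel. (gauss 1 x * gauss 1 y) *\<^sub>R F x y)"

definition good :: "(real \<Rightarrow> real \<Rightarrow> qmat) \<Rightarrow> bool" where
  "good F \<longleftrightarrow> (\<forall>x. integrable lborel (\<lambda>y. (gauss 1 x * gauss 1 y) *\<^sub>R F x y))
     \<and> integrable lborel (\<lambda>x. LINT y|lborel. (gauss 1 x * gauss 1 y) *\<^sub>R F x y)"

lemma good_term:
  assumes "pb w"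
  shows "good (\<lambda>x y. w x y *\<^sub>R B) \<and> V2 (\<lambda>x y. w x y *\<^sub>R B) = D2 w *\<^sub>R B"
proof -
  have e1: "(\<lambda>y. (gauss 1 x * gauss 1 y) *\<^sub>R (w x y *\<^sub>R B)) = (\<lambda>y. (gauss 1 x * gauss 1 y * w x y) *\<^sub>R B)" for x
    by auto
  have i1: "integrable lborel (\<lambda>y. (gauss 1 x * gauss 1 y * w x y) *\<^sub>R B)" for x
    by (rule integrable_scaleR_left) (rule inner_int[OF assms])
  have e2: "(LINT y|lborel. (gauss 1 x * gauss 1 y * w x y) *\<^sub>R B) = (LINT y|lborel. gauss 1 x * gauss 1 y * w x y) *\<^sub>R B" for x
    by (rule Bochner_Integration.integral_scaleR_left) (rule inner_int[OF assms])
  have i2: "integrable lborel (\<lambda>x. (LINT y|lborel. gauss 1 x * gauss 1 y * w x y) *\<^sub>R B)"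
    by (rule integrable_scaleR_left) (rule outer_int[OF assms])
  show ?thesis
    unfolding good_def V2_def D2_def e1 e2 using i1 i2
    by (simp add: Bochner_Integration.integral_scaleR_left outer_int[OF assms])
qed

lemma good_add:
  assumes "good F" "good G"
  shows "good (\<lambda>x y. F x y + G x y) \<and> V2 (\<lambda>x y. F x y + G x y) = V2 F + V2 G"
proof -
  have i1: "integrable lborel (\<lambda>y. (gauss 1 x * gauss 1 y) *\<^sub>R F x y)"
       "integrable lborel (\<lambda>y. (gauss 1 x * gauss 1 y) *\<^sub>R G x y)" for x
    using assms by (auto simp: good_def)
  have e: "(LINT y|lborel. (gauss 1 x * gauss 1 y) *\<^sub>R (F x y + G x y)) =
        (LINT y|lborel. (gauss 1 x * gauss 1 y) *\<^sub>R F x y) + (LINT y|lborel. (gauss 1 x * gauss 1 y) *\<^sub>R G x y)" for x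
    using i1[of x] by (simp add: scaleR_add_right Bochner_Integration.integral_add)
  have i2: "integrable lborel (\<lambda>x. LINT y|lborel. (gauss 1 x * gauss 1 y) *\<^sub>R F x y)"
      "integrable lborel (\<lambda>x. LINT y|lborel. (gauss 1 x * gauss 1 y) *\<^sub>R G x y)"
    using assms by (auto simp: good_def)
  show ?thesis
    unfolding good_def V2_def e using i1 i2
    by (simp add: scaleR_add_right Bochner_Integration.integral_add)
qed

lemma D2_add: "pb u \<Longrightarrow> pb v \<Longrightarrow> D2 (\<lambda>x y. u x y + v x y) = D2 u + D2 v"
proof -
  assume u: "pb u" and v: "pb v"
  have e: "(LINT y|lborel. gauss 1 x * gauss 1 y * (u x y + v x y)) =
        (LINT y|lborel. gauss 1 x * gauss 1 y * u x y) + (LINT y|lborel. gauss 1 x * gauss 1 y * v x y)" for x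
    using inner_int[OF u, of x] inner_int[OF v, of x]
    by (simp add: distrib_left Bochner_Integration.integral_add)
  show ?thesis unfolding D2_def e using outer_int[OF u] outer_int[OF v]
    by (simp add: Bochner_Integration.integral_add)
qed

lemma D2_cmult: "D2 (\<lambda>x y. c * u x y) = c * D2 u"
proof -
  have e: "(LINT y|lborel. gauss 1 x * gauss 1 y * (c * u x y)) = c * (LINT y|lborel. gauss 1 x * gauss 1 y * u x y)" for x
    by (simp add: mult_ac)
  show ?thesis unfolding D2_def e by simp
qed

lemma sq_le4: "(x::real)\<^sup>2 \<le> (1 + x^4) / 2"
proof -
  have "0 \<le> (x\<^sup>2 - 1)\<^sup>2" by simp
  then show ?thesis by (simp add: power2_diff power_mult[symmetric] field_simps)
qed

lemma pow4_nonneg: "0 \<le> (x::real)^4"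
  by (rule zero_le_even_power) simp

lemma poly_le4: "1 + x\<^sup>2 + y\<^sup>2 \<le> 2 * (1 + x^4 + (y::real)^4)"
proof -
  have l: "a \<le> (1 + c) / 2 \<Longrightarrow> b \<le> (1 + d) / 2 \<Longrightarrow> 0 \<le> c \<Longrightarrow> 0 \<le> d \<Longrightarrow> 1 + a + b \<le> 2 * (1 + c + d)" for a b c d :: real
    by (simp add: field_simps)
  show ?thesis by (rule l[OF sq_le4[of x] sq_le4[of y] pow4_nonneg[of x] pow4_nonneg[of y]])
qed

lemma pb_intro:
  assumes "(\<lambda>p. w (fst p) (snd p)) \<in> borel_measurable borel" "\<And>x y. \<bar>w x y\<bar> \<le> C * (1 + x\<^sup>2 + y\<^sup>2)"
  shows "pb w"
  unfolding pb_def
proof (intro conjI exI allI)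
  show "(\<lambda>p. w (fst p) (snd p)) \<in> borel_measurable borel" by (rule assms(1))
  fix x y
  have "\<bar>w x y\<bar> \<le> C * (1 + x\<^sup>2 + y\<^sup>2)" by (rule assms(2))
  also have "\<dots> \<le> \<bar>C\<bar> * (1 + x\<^sup>2 + y\<^sup>2)" by (intro mult_right_mono) auto
  also have "\<dots> \<le> \<bar>C\<bar> * (2 * (1 + x^4 + y^4))" by (intro mult_left_mono poly_le4) auto
  finally show "\<bar>w x y\<bar> \<le> (2 * \<bar>C\<bar>) * (1 + x^4 + y^4)" by (simp add: algebra_simps)
qed

lemma pb_intro4:
  assumes "(\<lambda>p. w (fst p) (snd p)) \<in> borel_measurable borel" "\<And>x y. \<bar>w x y\<bar> \<le> C * (1 + x^4 + y^4)"
  shows "pb w"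
  using assms unfolding pb_def by blast

lemma isCont_snc: "isCont snc x"
proof -
  have "snc = (\<lambda>x. if x = 0 then 1 else sin x / x)" by (auto simp: snc_def fun_eq_iff)
  then show ?thesis using isCont_sinc by simp
qed

lemma snc_meas[measurable]: "snc \<in> borel_measurable borel"
  by (intro borel_measurable_continuous_onI continuous_at_imp_continuous_on ballI isCont_snc)

lemma snc_abs: "\<bar>snc x\<bar> \<le> 1"
  using abs_sin_x_le_abs_x[of x] by (auto simp: snc_def abs_divide divide_le_eq_1)

lemma snc_mult: "x * snc x = sin x"
  by (simp add: snc_def)

lemma snc_even: "snc (- x) = snc x"
  by (simp add: snc_def)

definition phi :: "real \<Rightarrow> real \<Rightarrow> real \<Rightarrow> real" where "phi s x y = s * sqrt (x\<^sup>2 + y\<^sup>2) / 2"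
definition wP where "wP s x y = (cos (phi s x y))\<^sup>2"
definition wA where "wA s x y = s / 2 * cos (phi s x y) * snc (phi s x y) * x"
definition wB where "wB s x y = s / 2 * cos (phi s x y) * snc (phi s x y) * y"
definition wZ where "wZ s x y = s\<^sup>2 / 4 * (snc (phi s x y))\<^sup>2 * x\<^sup>2"
definition wX where "wX s x y = s\<^sup>2 / 4 * (snc (phi s x y))\<^sup>2 * y\<^sup>2"
definition wY where "wY s x y = s\<^sup>2 / 4 * (snc (phi s x y))\<^sup>2 * x * y"

lemma phi_neg1: "phi s (- x) y = phi s x y" and phi_neg2: "phi s x (- y) = phi s x y"
  by (simp_all add: phi_def)

lemma meas_phi[measurable]: "(\<lambda>p. phi s (fst p) (snd p)) \<in> borel_measurable (borel \<Otimes>\<^sub>M borel)"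
  unfolding phi_def by measurable

lemma absx: "\<bar>x::real\<bar> \<le> 1 + x\<^sup>2"
proof -
  have "0 \<le> (\<bar>x\<bar> - 1)\<^sup>2" by simp
  then have "2 * \<bar>x\<bar> \<le> \<bar>x\<bar>\<^sup>2 + 1" by (simp add: power2_diff)
  then show ?thesis by simp
qed

lemma absxy: "\<bar>x * y::real\<bar> \<le> 1 + x\<^sup>2 + y\<^sup>2"
proof -
  have "0 \<le> (\<bar>x\<bar> - \<bar>y\<bar>)\<^sup>2" by simp
  then have "2 * (\<bar>x\<bar> * \<bar>y\<bar>) \<le> \<bar>x\<bar>\<^sup>2 + \<bar>y\<bar>\<^sup>2" by (simp add: power2_diff mult.assoc)
  moreover have "0 \<le> \<bar>x\<bar> * \<bar>y\<bar>" by simp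
  ultimately have "\<bar>x\<bar> * \<bar>y\<bar> \<le> x\<^sup>2 + y\<^sup>2" unfolding power2_abs by linarith
  then show ?thesis by (simp add: abs_mult)
qed

lemma borel_prodI:
  "(f::real\<times>real\<Rightarrow>real) \<in> borel_measurable (borel \<Otimes>\<^sub>M borel) \<Longrightarrow> f \<in> borel_measurable borel"
  by (simp add: borel_prod)

lemma pb_wP: "pb (wP s)"
proof (rule pb_intro[where C=1])
  show "(\<lambda>p. wP s (fst p) (snd p)) \<in> borel_measurable borel" unfolding wP_def by (rule borel_prodI) measurable
  fix x y :: real
  have "\<bar>wP s x y\<bar> \<le> 1" unfolding wP_def using sin_cos_squared_add[of "phi s x y"] zero_le_power2[of "sin (phi s x y)"] by (subst abs_of_nonneg) (simp, linarith)
  also have "1 \<le> 1 * (1 + x\<^sup>2 + y\<^sup>2)" by simp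
  finally show "\<bar>wP s x y\<bar> \<le> 1 * (1 + x\<^sup>2 + y\<^sup>2)" .
qed

lemma bnd_cs: "\<bar>s / 2 * cos u * snc u * z\<bar> \<le> \<bar>s\<bar> / 2 * \<bar>z\<bar>"
proof -
  have "\<bar>s / 2 * cos u * snc u * z\<bar> = \<bar>s\<bar> / 2 * (\<bar>cos u\<bar> * \<bar>snc u\<bar>) * \<bar>z\<bar>"
    by (simp add: abs_mult)
  also have "\<dots> \<le> \<bar>s\<bar> / 2 * 1 * \<bar>z\<bar>"
    by (intro mult_right_mono mult_left_mono mult_le_one) (auto simp: snc_abs)
  finally show ?thesis by simp
qed

lemma bnd_s2: "\<bar>s\<^sup>2 / 4 * (snc u)\<^sup>2 * z\<bar> \<le> s\<^sup>2 / 4 * \<bar>z\<bar>"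
proof -
  have "(snc u)\<^sup>2 \<le> 1" using snc_abs[of u] by (simp add: abs_square_le_1)
  then have "\<bar>s\<^sup>2 / 4 * (snc u)\<^sup>2 * z\<bar> = s\<^sup>2 / 4 * (snc u)\<^sup>2 * \<bar>z\<bar>"
    by (simp add: abs_mult)
  also have "\<dots> \<le> s\<^sup>2 / 4 * 1 * \<bar>z\<bar>"
    using \<open>(snc u)\<^sup>2 \<le> 1\<close> by (intro mult_right_mono mult_left_mono) auto
  finally show ?thesis by simp
qed

lemma pb_wA: "pb (wA s)"
proof (rule pb_intro[where C="\<bar>s\<bar> / 2"])
  show "(\<lambda>p. wA s (fst p) (snd p)) \<in> borel_measurable borel" unfolding wA_def by (rule borel_prodI) measurable
  fix x y :: real
  have "\<bar>wA s x y\<bar> \<le> \<bar>s\<bar> / 2 * \<bar>x\<bar>" unfolding wA_def by (rule bnd_cs)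
  also have "\<dots> \<le> \<bar>s\<bar> / 2 * (1 + x\<^sup>2 + y\<^sup>2)" using absx[of x] zero_le_power2[of y] by (intro mult_left_mono) (linarith, simp)
  finally show "\<bar>wA s x y\<bar> \<le> \<bar>s\<bar> / 2 * (1 + x\<^sup>2 + y\<^sup>2)" .
qed

lemma pb_wB: "pb (wB s)"
proof (rule pb_intro[where C="\<bar>s\<bar> / 2"])
  show "(\<lambda>p. wB s (fst p) (snd p)) \<in> borel_measurable borel" unfolding wB_def by (rule borel_prodI) measurable
  fix x y :: real
  have "\<bar>wB s x y\<bar> \<le> \<bar>s\<bar> / 2 * \<bar>y\<bar>" unfolding wB_def by (rule bnd_cs)
  also have "\<dots> \<le> \<bar>s\<bar> / 2 * (1 + x\<^sup>2 + y\<^sup>2)" using absx[of y] zero_le_power2[of x] by (intro mult_left_mono) (linarith, simp)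
  finally show "\<bar>wB s x y\<bar> \<le> \<bar>s\<bar> / 2 * (1 + x\<^sup>2 + y\<^sup>2)" .
qed

lemma pb_wZ: "pb (wZ s)"
proof (rule pb_intro[where C="s\<^sup>2 / 4"])
  show "(\<lambda>p. wZ s (fst p) (snd p)) \<in> borel_measurable borel" unfolding wZ_def by (rule borel_prodI) measurable
  fix x y :: real
  have "\<bar>wZ s x y\<bar> \<le> s\<^sup>2 / 4 * \<bar>x\<^sup>2\<bar>" unfolding wZ_def by (rule bnd_s2)
  also have "\<dots> \<le> s\<^sup>2 / 4 * (1 + x\<^sup>2 + y\<^sup>2)" by (intro mult_left_mono) auto
  finally show "\<bar>wZ s x y\<bar> \<le> s\<^sup>2 / 4 * (1 + x\<^sup>2 + y\<^sup>2)" .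
qed

lemma pb_wX: "pb (wX s)"
proof (rule pb_intro[where C="s\<^sup>2 / 4"])
  show "(\<lambda>p. wX s (fst p) (snd p)) \<in> borel_measurable borel" unfolding wX_def by (rule borel_prodI) measurable
  fix x y :: real
  have "\<bar>wX s x y\<bar> \<le> s\<^sup>2 / 4 * \<bar>y\<^sup>2\<bar>" unfolding wX_def by (rule bnd_s2)
  also have "\<dots> \<le> s\<^sup>2 / 4 * (1 + x\<^sup>2 + y\<^sup>2)" by (intro mult_left_mono) auto
  finally show "\<bar>wX s x y\<bar> \<le> s\<^sup>2 / 4 * (1 + x\<^sup>2 + y\<^sup>2)" .
qed

lemma pb_wY: "pb (wY s)"
proof (rule pb_intro[where C="s\<^sup>2 / 4"])
  show "(\<lambda>p. wY s (fst p) (snd p)) \<in> borel_measurable borel" unfolding wY_def by (rule borel_prodI) measurable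
  fix x y :: real
  have "\<bar>wY s x y\<bar> \<le> s\<^sup>2 / 4 * \<bar>x * y\<bar>" unfolding wY_def using bnd_s2[of s "phi s x y" "x*y"] by (simp add: mult.assoc)
  also have "\<dots> \<le> s\<^sup>2 / 4 * (1 + x\<^sup>2 + y\<^sup>2)"
    using absxy[of x y] by (intro mult_left_mono) auto
  finally show "\<bar>wY s x y\<bar> \<le> s\<^sup>2 / 4 * (1 + x\<^sup>2 + y\<^sup>2)" .
qed

lemma V2_six:
  assumes "pb w1" "pb w2" "pb w3" "pb w4" "pb w5" "pb w6"
  shows "V2 (\<lambda>x y. w1 x y *\<^sub>R B1 + w2 x y *\<^sub>R B2 + w3 x y *\<^sub>R B3 + w4 x y *\<^sub>R B4 + w5 x y *\<^sub>R B5 + w6 x y *\<^sub>R B6)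
    = D2 w1 *\<^sub>R B1 + D2 w2 *\<^sub>R B2 + D2 w3 *\<^sub>R B3 + D2 w4 *\<^sub>R B4 + D2 w5 *\<^sub>R B5 + D2 w6 *\<^sub>R B6"
proof -
  note t1 = good_term[OF assms(1), of B1] and t2 = good_term[OF assms(2), of B2]
   and t3 = good_term[OF assms(3), of B3] and t4 = good_term[OF assms(4), of B4]
   and t5 = good_term[OF assms(5), of B5] and t6 = good_term[OF assms(6), of B6]
  note a2 = good_add[OF conjunct1[OF t1] conjunct1[OF t2]]
  note a3 = good_add[OF conjunct1[OF a2] conjunct1[OF t3]]
  note a4 = good_add[OF conjunct1[OF a3] conjunct1[OF t4]]
  note a5 = good_add[OF conjunct1[OF a4] conjunct1[OF t5]]
  note a6 = good_add[OF conjunct1[OF a5] conjunct1[OF t6]]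
  show ?thesis using a6 a5 a4 a3 a2 t1 t2 t3 t4 t5 t6 by simp
qed

lemma Lam12_formula:
  "Lam12 1 1 1 1 s \<rho> = D2 (wP s) *\<^sub>R \<rho> + D2 (wA s) *\<^sub>R Cz \<rho> + D2 (wB s) *\<^sub>R Cx \<rho>
     + D2 (wZ s) *\<^sub>R Zm \<rho> + D2 (wX s) *\<^sub>R Xm \<rho> + D2 (wY s) *\<^sub>R Ym \<rho>"
proof -
  have "Lam12 1 1 1 1 s \<rho> = V2 (\<lambda>x y. evolve ((1/2) *\<^sub>R Nm x y) s \<rho>)"
    unfolding Lam12_def V2_def Nm_def by simp
  also have "\<dots> = V2 (\<lambda>x y. wP s x y *\<^sub>R \<rho> + wA s x y *\<^sub>R Cz \<rho> + wB s x y *\<^sub>R Cx \<rho>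
     + wZ s x y *\<^sub>R Zm \<rho> + wX s x y *\<^sub>R Xm \<rho> + wY s x y *\<^sub>R Ym \<rho>)"
    unfolding evolve_formula wP_def wA_def wB_def wZ_def wX_def wY_def phi_def by (simp add: mult_ac)
  also have "\<dots> = D2 (wP s) *\<^sub>R \<rho> + D2 (wA s) *\<^sub>R Cz \<rho> + D2 (wB s) *\<^sub>R Cx \<rho>
     + D2 (wZ s) *\<^sub>R Zm \<rho> + D2 (wX s) *\<^sub>R Xm \<rho> + D2 (wY s) *\<^sub>R Ym \<rho>"
    by (rule V2_six[OF pb_wP pb_wA pb_wB pb_wZ pb_wX pb_wY])
  finally show ?thesis .
qed

lemma inner_zero:
  assumes "pb w" "\<And>x y. w x (- y) = - w x y"
  shows "D2 w = 0"
proof -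
  have "(LINT y|lborel. gauss 1 x * gauss 1 y * w x y) = 0" for x
  proof (rule odd_int0)
    have [measurable]: "w x \<in> borel_measurable borel" by (rule pb_meas1[OF assms(1)])
    show "(\<lambda>y. gauss 1 x * gauss 1 y * w x y) \<in> borel_measurable borel" by measurable
    show "gauss 1 x * gauss 1 (- y) * w x (- y) = - (gauss 1 x * gauss 1 y * w x y)" for y
      using assms(2) by (simp add: gauss_def)
  qed
  then show ?thesis by (simp add: D2_def)
qed

lemma outer_zero:
  assumes "pb w" "\<And>x y. w (- x) y = - w x y"
  shows "D2 w = 0"
  unfolding D2_def
proof (rule odd_int0)
  show "(\<lambda>x. LINT y|lborel. gauss 1 x * gauss 1 y * w x y) \<in> borel_measurable borel"
    by (rule inner_meas[OF assms(1)])
  show "(LINT y|lborel. gauss 1 (- x) * gauss 1 y * w (- x) y) = - (LINT y|lborel. gauss 1 x * gauss 1 y * w x y)" for x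
    using assms(2) by (simp add: gauss_def)
qed

lemma DA0: "D2 (wA s) = 0"
  by (rule outer_zero[OF pb_wA]) (simp add: wA_def phi_neg1)
lemma DB0: "D2 (wB s) = 0"
  by (rule inner_zero[OF pb_wB]) (simp add: wB_def phi_neg2)
lemma DY0: "D2 (wY s) = 0"
  by (rule inner_zero[OF pb_wY]) (simp add: wY_def phi_neg2)

lemma Lam12_formula2:
  "Lam12 1 1 1 1 s \<rho> = D2 (wP s) *\<^sub>R \<rho> + D2 (wZ s) *\<^sub>R Zm \<rho> + D2 (wX s) *\<^sub>R Xm \<rho>"
  unfolding Lam12_formula DA0 DB0 DY0 by simp

definition ee :: "real \<Rightarrow> real" where "ee s = exp (- (s\<^sup>2) / 2)"

lemma Ecos: "(LINT x|lborel. gauss 1 x * cos (s * x)) = ee s"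
proof -
  interpret P: prob_space std_normal_distribution by (rule prob_space_normal_density) simp
  have int: "integrable std_normal_distribution (\<lambda>x. iexp (s * x))"
    by (rule P.integrable_iexp) auto
  have "Re (char std_normal_distribution s) = ee s"
    by (simp add: char_std_normal_distribution ee_def)
  moreover have "Re (char std_normal_distribution s) = (LINT x|std_normal_distribution. Re (iexp (s * x)))"
    unfolding char_def by (rule integral_Re[symmetric]) (rule int)
  moreover have "(\<lambda>x. Re (iexp (s * x))) = (\<lambda>x. cos (s * x))"
    by (simp add: Re_exp fun_eq_iff)
  moreover have "(LINT x|std_normal_distribution. cos (s * x)) = (LINT x|lborel. std_normal_density x * cos (s * x))"
    by (subst integral_density) (auto simp: normal_density_nonneg)
  ultimately show ?thesis by (simp add: gauss1_fun)
qed

lemma sing_int: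
  assumes [measurable]: "w \<in> borel_measurable borel" and C: "\<And>x. \<bar>w x\<bar> \<le> C * (1 + x\<^sup>2)"
  shows "integrable lborel (\<lambda>x. gauss 1 x * w x)"
proof (rule Bochner_Integration.integrable_bound)
  show "integrable lborel (\<lambda>x. C * gauss 1 x + C * (gauss 1 x * x^2))"
    using gi[of 2] gi0 by auto
  show "(\<lambda>x. gauss 1 x * w x) \<in> borel_measurable lborel" by measurable
  show "AE x in lborel. norm (gauss 1 x * w x) \<le> norm (C * gauss 1 x + C * (gauss 1 x * x^2))"
  proof (rule AE_I2)
    fix x
    have "\<bar>gauss 1 x * w x\<bar> = gauss 1 x * \<bar>w x\<bar>" using gauss_nonneg by (simp add: abs_mult)
    also have "\<dots> \<le> gauss 1 x * (C * (1 + x\<^sup>2))" using C gauss_nonneg by (intro mult_left_mono) auto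
    also have "\<dots> = C * gauss 1 x + C * (gauss 1 x * x^2)" by (simp add: algebra_simps)
    finally show "norm (gauss 1 x * w x) \<le> norm (C * gauss 1 x + C * (gauss 1 x * x^2))" by simp
  qed
qed

lemma cos_sq_half: "(cos (s * sqrt (m\<^sup>2 + 0\<^sup>2) / 2))\<^sup>2 = (1 + cos (s * m)) / 2"
proof -
  have a: "cos (s * m) = cos (s * \<bar>m\<bar>)" by (cases "m \<ge> 0") simp_all
  have b: "cos (s * \<bar>m\<bar>) = 2 * (cos (s * \<bar>m\<bar> / 2))\<^sup>2 - 1" using cos_double_cos[of "s*\<bar>m\<bar>/2"] by simp
  have c: "sqrt (m\<^sup>2 + 0\<^sup>2) = \<bar>m\<bar>" by simp
  show ?thesis unfolding c using a b by (auto simp: field_simps)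
qed

lemma cos_sq_half': "(cos (s * sqrt (0\<^sup>2 + m\<^sup>2) / 2))\<^sup>2 = (1 + cos (s * m)) / 2"
proof -
  have "0\<^sup>2 + m\<^sup>2 = m\<^sup>2 + (0::real)\<^sup>2" by simp
  then show ?thesis by (simp only: cos_sq_half)
qed

lemma sin_sq_half: "s\<^sup>2 / 4 * (snc (s * sqrt (m\<^sup>2 + 0\<^sup>2) / 2))\<^sup>2 * m\<^sup>2 = (1 - cos (s * m)) / 2"
proof -
  let ?p = "s * sqrt (m\<^sup>2 + 0\<^sup>2) / 2"
  have "s\<^sup>2 / 4 * (snc ?p)\<^sup>2 * m\<^sup>2 = (?p * snc ?p)\<^sup>2"
    by (simp add: power_mult_distrib power_divide)
  also have "\<dots> = (sin ?p)\<^sup>2" by (simp only: snc_mult)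
  also have "\<dots> = 1 - (cos ?p)\<^sup>2" by (simp add: sin_squared_eq)
  also have "\<dots> = (1 - cos (s * m)) / 2" unfolding cos_sq_half by (simp add: field_simps)
  finally show ?thesis .
qed

lemma sin_sq_half': "s\<^sup>2 / 4 * (snc (s * sqrt (0\<^sup>2 + m\<^sup>2) / 2))\<^sup>2 * m\<^sup>2 = (1 - cos (s * m)) / 2"
proof -
  have "0\<^sup>2 + m\<^sup>2 = m\<^sup>2 + (0::real)\<^sup>2" by simp
  then show ?thesis by (simp only: sin_sq_half)
qed

lemma bnd_half: fixes s x :: real shows "\<bar>(1 + cos (s * x)) / 2\<bar> \<le> 1 * (1 + x\<^sup>2)" "\<bar>(1 - cos (s * x)) / 2\<bar> \<le> 1 * (1 + x\<^sup>2)"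
    "\<bar>cos (s * x)\<bar> \<le> 1 * (1 + x\<^sup>2)"
proof -
  have "\<bar>cos (s * x)\<bar> \<le> 1" by (rule abs_cos_le_one)
  moreover have "0 \<le> x\<^sup>2" by simp
  ultimately show "\<bar>(1 + cos (s * x)) / 2\<bar> \<le> 1 * (1 + x\<^sup>2)" "\<bar>(1 - cos (s * x)) / 2\<bar> \<le> 1 * (1 + x\<^sup>2)"
    "\<bar>cos (s * x)\<bar> \<le> 1 * (1 + x\<^sup>2)"
    by (simp_all add: abs_le_iff, linarith+)
qed

lemma meas_A1[measurable]: "(\<lambda>m. s / 2 * cos (s * sqrt (m\<^sup>2) / 2) * snc (s * sqrt (m\<^sup>2) / 2) * m) \<in> borel_measurable borel"
  by measurable

lemma int_A1: "integrable lborel (\<lambda>m. gauss 1 m * (s / 2 * cos (s * sqrt (m\<^sup>2) / 2) * snc (s * sqrt (m\<^sup>2) / 2) * m))"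
proof (rule sing_int[where C="\<bar>s\<bar>/2"])
  fix x :: real
  have "\<bar>s / 2 * cos (s * sqrt (x\<^sup>2) / 2) * snc (s * sqrt (x\<^sup>2) / 2) * x\<bar> \<le> \<bar>s\<bar> / 2 * \<bar>x\<bar>" by (rule bnd_cs)
  also have "\<dots> \<le> \<bar>s\<bar> / 2 * (1 + x\<^sup>2)" using absx[of x] by (intro mult_left_mono) auto
  finally show "\<bar>s / 2 * cos (s * sqrt (x\<^sup>2) / 2) * snc (s * sqrt (x\<^sup>2) / 2) * x\<bar> \<le> \<bar>s\<bar> / 2 * (1 + x\<^sup>2)" .
qed measurable

lemma E_A1: "(LINT m|lborel. gauss 1 m * (s / 2 * cos (s * sqrt (m\<^sup>2) / 2) * snc (s * sqrt (m\<^sup>2) / 2) * m)) = 0"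
  by (rule odd_int0) (auto simp: gauss_def)

lemma int_cos: "integrable lborel (\<lambda>m. gauss 1 m * cos (s * m))"
  by (rule sing_int[where C=1], measurable, rule bnd_half(3))

lemma E_half_plus: "(LINT m|lborel. gauss 1 m * ((1 + cos (s * m)) / 2)) = (1 + ee s) / 2"
proof -
  have "(LINT m|lborel. gauss 1 m * ((1 + cos (s * m)) / 2)) = (LINT m|lborel. gauss 1 m / 2 + gauss 1 m * cos (s * m) / 2)"
    by (simp add: algebra_simps add_divide_distrib)
  also have "\<dots> = (LINT m|lborel. gauss 1 m) / 2 + (LINT m|lborel. gauss 1 m * cos (s * m)) / 2"
    using gi0 int_cos by (simp add: Bochner_Integration.integral_add)
  finally show ?thesis by (simp add: E0 Ecos add_divide_distrib)
qed

lemma E_half_minus: "(LINT m|lborel. gauss 1 m * ((1 - cos (s * m)) / 2)) = (1 - ee s) / 2"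
proof -
  have "(LINT m|lborel. gauss 1 m * ((1 - cos (s * m)) / 2)) = (LINT m|lborel. gauss 1 m / 2 - gauss 1 m * cos (s * m) / 2)"
    by (simp add: algebra_simps diff_divide_distrib)
  also have "\<dots> = (LINT m|lborel. gauss 1 m) / 2 - (LINT m|lborel. gauss 1 m * cos (s * m)) / 2"
    using gi0 int_cos by (simp add: Bochner_Integration.integral_diff)
  finally show ?thesis by (simp add: E0 Ecos diff_divide_distrib)
qed

lemma int_half_plus: "integrable lborel (\<lambda>m. gauss 1 m * ((1 + cos (s * m)) / 2))"
  by (rule sing_int[where C=1], measurable, rule bnd_half(1))
lemma int_half_minus: "integrable lborel (\<lambda>m. gauss 1 m * ((1 - cos (s * m)) / 2))"
  by (rule sing_int[where C=1], measurable, rule bnd_half(2))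

lemma three_int:
  assumes "integrable lborel (\<lambda>m. gauss 1 m * a m)" "integrable lborel (\<lambda>m. gauss 1 m * b m)"
    "integrable lborel (\<lambda>m. gauss 1 m * c m)"
  shows "(LINT m|lborel. gauss 1 m *\<^sub>R (a m *\<^sub>R A + b m *\<^sub>R B + c m *\<^sub>R (C::qmat))) =
    (LINT m|lborel. gauss 1 m * a m) *\<^sub>R A + (LINT m|lborel. gauss 1 m * b m) *\<^sub>R B + (LINT m|lborel. gauss 1 m * c m) *\<^sub>R C"
proof -
  have e: "(\<lambda>m. gauss 1 m *\<^sub>R (a m *\<^sub>R A + b m *\<^sub>R B + c m *\<^sub>R C)) =
     (\<lambda>m. (gauss 1 m * a m) *\<^sub>R A + (gauss 1 m * b m) *\<^sub>R B + (gauss 1 m * c m) *\<^sub>R C)"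
    by (simp add: fun_eq_iff scaleR_add_right)
  have i: "integrable lborel (\<lambda>m. (gauss 1 m * a m) *\<^sub>R A)" "integrable lborel (\<lambda>m. (gauss 1 m * b m) *\<^sub>R B)"
     "integrable lborel (\<lambda>m. (gauss 1 m * c m) *\<^sub>R C)"
    using assms by (auto intro: integrable_scaleR_left)
  show ?thesis unfolding e using i assms
    by (simp add: Bochner_Integration.integral_add Bochner_Integration.integral_scaleR_left)
qed

lemma Lam1_formula: "Lam1 1 1 s \<rho> = ((1 + ee s) / 2) *\<^sub>R \<rho> + ((1 - ee s) / 2) *\<^sub>R Zm \<rho>"
proof -
  have pt: "evolve ((1/2) *\<^sub>R ((1 * m) *\<^sub>R sigma_z)) s \<rho> =
     ((1 + cos (s * m)) / 2) *\<^sub>R \<rho> + (s / 2 * cos (s * sqrt (m\<^sup>2) / 2) * snc (s * sqrt (m\<^sup>2) / 2) * m) *\<^sub>R Cz \<rho>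
       + ((1 - cos (s * m)) / 2) *\<^sub>R Zm \<rho>" for m
  proof -
    have N: "(1 * m) *\<^sub>R sigma_z = Nm m 0" by (simp add: Nm_def)
    show ?thesis unfolding N evolve_formula cos_sq_half sin_sq_half by simp
  qed
  show ?thesis unfolding Lam1_def pt three_int[OF int_half_plus int_A1 int_half_minus] E_half_plus E_half_minus E_A1
    by simp
qed

lemma Lam2_formula: "Lam2 1 1 s \<rho> = ((1 + ee s) / 2) *\<^sub>R \<rho> + ((1 - ee s) / 2) *\<^sub>R Xm \<rho>"
proof -
  have pt: "evolve ((1/2) *\<^sub>R ((1 * m) *\<^sub>R sigma_x)) s \<rho> =
     ((1 + cos (s * m)) / 2) *\<^sub>R \<rho> + (s / 2 * cos (s * sqrt (m\<^sup>2) / 2) * snc (s * sqrt (m\<^sup>2) / 2) * m) *\<^sub>R Cx \<rho>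
       + ((1 - cos (s * m)) / 2) *\<^sub>R Xm \<rho>" for m
  proof -
    have N: "(1 * m) *\<^sub>R sigma_x = Nm 0 m" by (simp add: Nm_def)
    show ?thesis unfolding N evolve_formula cos_sq_half' sin_sq_half' by simp
  qed
  show ?thesis unfolding Lam2_def pt three_int[OF int_half_plus int_A1 int_half_minus] E_half_plus E_half_minus E_A1
    by simp
qed

definition sigma_y :: qmat where
  "sigma_y = (\<chi> i j. if i = j then 0 else (if i = 1 then - \<i> else \<i>))"

definition Dm :: "real \<Rightarrow> real \<Rightarrow> real \<Rightarrow> qmat \<Rightarrow> qmat" where
  "Dm a b c \<rho> = a *\<^sub>R \<rho> + b *\<^sub>R Zm \<rho> + c *\<^sub>R Xm \<rho>"

lemmas mdefs2 = mdefs sigma_y_def Zm_def Xm_def Dm_def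

lemma Zx: "Zm sigma_x = - sigma_x" and Xx: "Xm sigma_x = sigma_x"
  and Zy: "Zm sigma_y = - sigma_y" and Xy: "Xm sigma_y = - sigma_y"
  and Zz: "Zm sigma_z = sigma_z" and Xz: "Xm sigma_z = - sigma_z"
  by (simp_all add: mdefs2)

lemma Zm_scale: "Zm (c *\<^sub>R \<rho>) = c *\<^sub>R Zm \<rho>" and Xm_scale: "Xm (c *\<^sub>R \<rho>) = c *\<^sub>R Xm \<rho>"
  by (simp_all add: Zm_def Xm_def matrix_scalar_ac scalar_matrix_assoc)

lemma Dm_scale: "Dm a b c (k *\<^sub>R \<rho>) = k *\<^sub>R Dm a b c \<rho>"
  by (simp add: Dm_def Zm_scale Xm_scale algebra_simps)

lemma Dm_x: "Dm a b c sigma_x = (a - b + c) *\<^sub>R sigma_x"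
  and Dm_y: "Dm a b c sigma_y = (a - b - c) *\<^sub>R sigma_y"
  and Dm_z: "Dm a b c sigma_z = (a + b - c) *\<^sub>R sigma_z"
  by (simp_all add: Dm_def Zx Xx Zy Xy Zz Xz algebra_simps)

lemma nz: "sigma_x \<noteq> 0" "sigma_y \<noteq> 0" "sigma_z \<noteq> 0"
  by (auto simp: vec_eq_iff forall_2 sigma_x_def sigma_y_def sigma_z_def)

definition Di :: "real \<Rightarrow> real \<Rightarrow> real \<Rightarrow> qmat \<Rightarrow> qmat" where
  "Di a b c y = (let p = complex_of_real (a + b); q = complex_of_real (a - b); r = complex_of_real c in
     (\<chi> i j. if i = j then
       (p * y$i$j - r * y$(if i = 1 then 2 else 1)$(if i = 1 then 2 else 1)) / (p\<^sup>2 - r\<^sup>2)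
     else (q * y$i$j - r * y$j$i) / (q\<^sup>2 - r\<^sup>2)))"

lemma Dm_ent:
  "Dm a b c y $ 1 $ 1 = complex_of_real (a + b) * y$1$1 + complex_of_real c * y$2$2"
  "Dm a b c y $ 2 $ 2 = complex_of_real (a + b) * y$2$2 + complex_of_real c * y$1$1"
  "Dm a b c y $ 1 $ 2 = complex_of_real (a - b) * y$1$2 + complex_of_real c * y$2$1"
  "Dm a b c y $ 2 $ 1 = complex_of_real (a - b) * y$2$1 + complex_of_real c * y$1$2"
  by (simp_all add: mdefs2 cplx_scaleR algebra_simps)

lemma Di_ent:
  "Di a b c y $ 1 $ 1 = (complex_of_real (a + b) * y$1$1 - complex_of_real c * y$2$2) / ((complex_of_real (a + b))\<^sup>2 - (complex_of_real c)\<^sup>2)"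
  "Di a b c y $ 2 $ 2 = (complex_of_real (a + b) * y$2$2 - complex_of_real c * y$1$1) / ((complex_of_real (a + b))\<^sup>2 - (complex_of_real c)\<^sup>2)"
  "Di a b c y $ 1 $ 2 = (complex_of_real (a - b) * y$1$2 - complex_of_real c * y$2$1) / ((complex_of_real (a - b))\<^sup>2 - (complex_of_real c)\<^sup>2)"
  "Di a b c y $ 2 $ 1 = (complex_of_real (a - b) * y$2$1 - complex_of_real c * y$1$2) / ((complex_of_real (a - b))\<^sup>2 - (complex_of_real c)\<^sup>2)"
  by (simp_all add: Di_def Let_def)

lemma inv2a: assumes "(p::complex)\<^sup>2 - r\<^sup>2 \<noteq> 0"
  shows "p * ((p*y1 - r*y2)/(p\<^sup>2 - r\<^sup>2)) + r * ((p*y2 - r*y1)/(p\<^sup>2 - r\<^sup>2)) = y1"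
proof -
  have "p * ((p*y1 - r*y2)/(p\<^sup>2 - r\<^sup>2)) + r * ((p*y2 - r*y1)/(p\<^sup>2 - r\<^sup>2)) = (p*(p*y1 - r*y2) + r*(p*y2 - r*y1))/(p\<^sup>2 - r\<^sup>2)"
    by (simp add: add_divide_distrib)
  also have "p*(p*y1 - r*y2) + r*(p*y2 - r*y1) = (p\<^sup>2 - r\<^sup>2) * y1"
    by (simp add: algebra_simps power2_eq_square)
  finally show ?thesis using assms by simp
qed

lemma inv2b: assumes "(p::complex)\<^sup>2 - r\<^sup>2 \<noteq> 0"
  shows "(p * (p*y1 + r*y2) - r * (p*y2 + r*y1))/(p\<^sup>2 - r\<^sup>2) = y1"
proof -
  have "p * (p*y1 + r*y2) - r * (p*y2 + r*y1) = (p\<^sup>2 - r\<^sup>2) * y1"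
    by (simp add: algebra_simps power2_eq_square)
  then show ?thesis using assms by simp
qed

lemma Dm_bij:
  assumes "(a+b)\<^sup>2 - c\<^sup>2 \<noteq> 0" "(a-b)\<^sup>2 - c\<^sup>2 \<noteq> 0"
  shows "bij (Dm a b c)"
proof (rule o_bij[where g="Di a b c"])
  have d1: "(complex_of_real (a + b))\<^sup>2 - (complex_of_real c)\<^sup>2 \<noteq> 0"
  proof
    assume "(complex_of_real (a + b))\<^sup>2 - (complex_of_real c)\<^sup>2 = 0"
    then have "complex_of_real ((a+b)\<^sup>2 - c\<^sup>2) = 0" by simp
    then show False using assms(1) by (simp only: of_real_eq_0_iff)
  qed
  have d2: "(complex_of_real (a - b))\<^sup>2 - (complex_of_real c)\<^sup>2 \<noteq> 0"
  proof
    assume "(complex_of_real (a - b))\<^sup>2 - (complex_of_real c)\<^sup>2 = 0"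
    then have "complex_of_real ((a-b)\<^sup>2 - c\<^sup>2) = 0" by simp
    then show False using assms(2) by (simp only: of_real_eq_0_iff)
  qed
  show "Di a b c \<circ> Dm a b c = id"
    by (simp only: fun_eq_iff vec_eq_iff forall_2 o_apply id_apply Di_ent Dm_ent inv2b[OF d1] inv2b[OF d2] simp_thms)
  show "Dm a b c \<circ> Di a b c = id"
    by (simp only: fun_eq_iff vec_eq_iff forall_2 o_apply id_apply Di_ent Dm_ent inv2a[OF d1] inv2a[OF d2] simp_thms)
qed

lemma Dm_deriv:
  assumes "(\<alpha> has_real_derivative a') (at t)" "(\<beta> has_real_derivative b') (at t)" "(\<gamma> has_real_derivative c') (at t)"
  shows "((\<lambda>s. Dm (\<alpha> s) (\<beta> s) (\<gamma> s) \<rho>) has_vector_derivative Dm a' b' c' \<rho>) (at t)"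
  unfolding Dm_def
  using assms by (auto intro!: derivative_eq_intros simp: has_real_derivative_iff_has_vector_derivative)

lemma regular_Dm:
  assumes "(\<alpha> has_real_derivative a') (at t)" "(\<beta> has_real_derivative b') (at t)" "(\<gamma> has_real_derivative c') (at t)"
    and "(\<alpha> t + \<beta> t)\<^sup>2 - (\<gamma> t)\<^sup>2 \<noteq> 0" "(\<alpha> t - \<beta> t)\<^sup>2 - (\<gamma> t)\<^sup>2 \<noteq> 0"
  shows "regular_at (\<lambda>s. Dm (\<alpha> s) (\<beta> s) (\<gamma> s)) t"
  unfolding regular_at_def
proof
  show "bij (Dm (\<alpha> t) (\<beta> t) (\<gamma> t))" by (rule Dm_bij[OF assms(4,5)])
  show "\<forall>\<rho>. (\<lambda>s. Dm (\<alpha> s) (\<beta> s) (\<gamma> s) \<rho>) differentiable at t"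
    using Dm_deriv[OF assms(1-3)] by (auto simp: vector_derivative_works[symmetric] differentiable_def has_vector_derivative_def)
qed

lemma gen_eig:
  assumes lin: "\<And>s k. \<Lambda> s (k *\<^sub>R v) = (k * l s) *\<^sub>R v"
    and b: "bij (\<Lambda> t)" and nz: "l t \<noteq> 0" and d: "(l has_real_derivative l') (at t)"
  shows "generator \<Lambda> t v = (l' / l t) *\<^sub>R v"
proof -
  have "\<Lambda> t ((1 / l t) *\<^sub>R v) = v" using lin[of t "1 / l t"] nz by simp
  then have i: "inv (\<Lambda> t) v = (1 / l t) *\<^sub>R v" by (rule inv_f_eq[OF bij_is_inj[OF b]])
  have e: "(\<lambda>s. \<Lambda> s (inv (\<Lambda> t) v)) = (\<lambda>s. (l s / l t) *\<^sub>R v)"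
    unfolding i lin by auto
  have "((\<lambda>s. (l s / l t) *\<^sub>R v) has_vector_derivative (l' / l t) *\<^sub>R v) (at t)"
    using d nz by (auto intro!: derivative_eq_intros simp: has_real_derivative_iff_has_vector_derivative)
  then show ?thesis unfolding generator_def e by (rule vector_derivative_at)
qed

lemma deriv_int:
  fixes f f' :: "real \<Rightarrow> 'a \<Rightarrow> real" and M :: "'a measure" and w :: "'a \<Rightarrow> real"
  assumes d: "0 < d"
    and int: "\<And>s. s \<in> ball t d \<Longrightarrow> integrable M (f s)"
    and der: "\<And>s x. s \<in> ball t d \<Longrightarrow> ((\<lambda>s. f s x) has_real_derivative f' s x) (at s)"
    and bnd: "\<And>s x. s \<in> ball t d \<Longrightarrow> \<bar>f' s x\<bar> \<le> w x"
    and wint: "integrable M w"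
    and meas: "f' t \<in> borel_measurable M"
  shows "((\<lambda>s. integral\<^sup>L M (f s)) has_real_derivative integral\<^sup>L M (f' t)) (at t)"
proof -
  have lip: "\<bar>f (t+h) x - f t x\<bar> \<le> w x * \<bar>h\<bar>" if h: "t + h \<in> ball t d" for h x
  proof -
    have "norm ((\<lambda>s. f s x) (t+h) - (\<lambda>s. f s x) t) \<le> w x * norm ((t+h) - t)"
    proof (rule field_differentiable_bound[where S="ball t d" and f'="\<lambda>s. f' s x"])
      show "convex (ball t d)" by simp
      show "((\<lambda>s. f s x) has_field_derivative f' s x) (at s within ball t d)" if "s \<in> ball t d" for s
        using der[OF that] by (rule has_field_derivative_at_within)
      show "norm (f' s x) \<le> w x" if "s \<in> ball t d" for s using bnd[OF that] by simp
      show "t + h \<in> ball t d" by (rule h)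
      show "t \<in> ball t d" using d by simp
    qed
    then show ?thesis by simp
  qed
  have tin: "t \<in> ball t d" using d by simp
  let ?q = "\<lambda>h x. (f (t + h) x - f t x) / h"
  have qe: "(integral\<^sup>L M (f (t+h)) - integral\<^sup>L M (f t)) / h = integral\<^sup>L M (?q h)" if "t + h \<in> ball t d" for h
    using int[OF that] int[OF tin] by (simp add: diff_divide_distrib)
  have "((\<lambda>h. (integral\<^sup>L M (f (t+h)) - integral\<^sup>L M (f t)) / h) \<longlongrightarrow> integral\<^sup>L M (f' t)) (at 0 within ball 0 d)"
  proof (unfold tendsto_at_iff_sequentially, intro allI impI)
    fix X :: "nat \<Rightarrow> real"
    assume X: "\<forall>i. X i \<in> ball 0 d - {0}" and X0: "X \<longlonglongrightarrow> 0"
    have Xb: "t + X i \<in> ball t d" for i using X by (auto simp: dist_norm)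
    have Xn: "X i \<noteq> 0" for i using X by auto
    have "(\<lambda>i. integral\<^sup>L M (?q (X i))) \<longlonglongrightarrow> integral\<^sup>L M (f' t)"
    proof (rule integral_dominated_convergence[where w=w])
      show "f' t \<in> borel_measurable M" by (rule meas)
      show "?q (X i) \<in> borel_measurable M" for i
        using int[OF Xb[of i]] int[OF tin] by measurable
      show "integrable M w" by (rule wint)
      show "AE x in M. (\<lambda>i. ?q (X i) x) \<longlonglongrightarrow> f' t x"
      proof (rule AE_I2)
        fix x
        have "((\<lambda>h. (f (t + h) x - f t x) / h) \<longlongrightarrow> f' t x) (at 0)"
          using der[OF tin, of x] by (simp add: DERIV_def)
        moreover have "filterlim X (at 0) sequentially"
          using X0 Xn by (auto simp: filterlim_at)
        ultimately show "(\<lambda>i. ?q (X i) x) \<longlonglongrightarrow> f' t x"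
          by (rule filterlim_compose)
      qed
      show "AE x in M. norm (?q (X i) x) \<le> w x" for i
      proof (rule AE_I2)
        fix x
        have "\<bar>?q (X i) x\<bar> = \<bar>f (t + X i) x - f t x\<bar> / \<bar>X i\<bar>" by (simp add: abs_divide)
        also have "\<dots> \<le> w x * \<bar>X i\<bar> / \<bar>X i\<bar>" using lip[OF Xb[of i]] by (intro divide_right_mono) auto
        also have "\<dots> = w x" using Xn[of i] by simp
        finally show "norm (?q (X i) x) \<le> w x" by simp
      qed
    qed
    then show "((\<lambda>h. (integral\<^sup>L M (f (t+h)) - integral\<^sup>L M (f t)) / h) \<circ> X) \<longlonglongrightarrow> integral\<^sup>L M (f' t)"
      by (simp add: o_def qe[OF Xb])
  qed
  moreover have "at (0::real) within ball 0 d = at 0" using d by (intro at_within_open) auto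
  ultimately show ?thesis by (simp add: DERIV_def)
qed

lemma int_poly4x: "integrable lborel (\<lambda>x. gauss 1 x * C * (4 + x^4))"
proof -
  have "(\<lambda>x. gauss 1 x * C * (4 + x^4)) = (\<lambda>x. 4 * C * gauss 1 x + C * (gauss 1 x * x^4))"
    by (auto simp: algebra_simps)
  then show ?thesis using gi[of 4] gi0 by auto
qed

lemma D2_deriv:
  assumes d: "0 < d"
    and pbw: "\<And>s. pb (w s)"
    and der: "\<And>s x y. s \<in> ball t d \<Longrightarrow> ((\<lambda>s. w s x y) has_real_derivative w' s x y) (at s)"
    and pbw': "\<And>s. s \<in> ball t d \<Longrightarrow> pb (w' s)"
    and bnd: "\<And>s x y. s \<in> ball t d \<Longrightarrow> \<bar>w' s x y\<bar> \<le> C * (1 + x^4 + y^4)"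
  shows "((\<lambda>s. D2 (w s)) has_real_derivative D2 (w' t)) (at t)"
proof -
  have inner: "((\<lambda>s. LINT y|lborel. gauss 1 x * gauss 1 y * w s x y) has_real_derivative
      (LINT y|lborel. gauss 1 x * gauss 1 y * w' s0 x y)) (at s0)" if s0: "s0 \<in> ball t d" for s0 x
  proof (rule deriv_int[where d="d - dist t s0" and w="\<lambda>y. gauss 1 x * C * (1 + x^4) * gauss 1 y + gauss 1 x * C * (gauss 1 y * y^4)"])
    show "0 < d - dist t s0" using s0 by simp
    have sub: "s \<in> ball t d" if "s \<in> ball s0 (d - dist t s0)" for s
      using that dist_triangle[of t s s0] by (auto simp: dist_commute)
    show "integrable lborel (\<lambda>y. gauss 1 x * gauss 1 y * w s x y)" for s
      by (rule inner_int[OF pbw])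
    show "((\<lambda>s. gauss 1 x * gauss 1 y * w s x y) has_real_derivative gauss 1 x * gauss 1 y * w' s x y) (at s)"
      if "s \<in> ball s0 (d - dist t s0)" for s y
      using der[OF sub[OF that]] by (rule DERIV_cmult)
    show "\<bar>gauss 1 x * gauss 1 y * w' s x y\<bar> \<le> gauss 1 x * C * (1 + x^4) * gauss 1 y + gauss 1 x * C * (gauss 1 y * y^4)"
      if "s \<in> ball s0 (d - dist t s0)" for s y
    proof -
      have "\<bar>gauss 1 x * gauss 1 y * w' s x y\<bar> = gauss 1 x * gauss 1 y * \<bar>w' s x y\<bar>"
        using gauss_nonneg by (simp add: abs_mult)
      also have "\<dots> \<le> gauss 1 x * gauss 1 y * (C * (1 + x^4 + y^4))"
        using bnd[OF sub[OF that]] gauss_nonneg by (intro mult_left_mono) auto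
      also have "\<dots> = gauss 1 x * C * (1 + x^4) * gauss 1 y + gauss 1 x * C * (gauss 1 y * y^4)"
        by (simp add: algebra_simps)
      finally show ?thesis .
    qed
    show "integrable lborel (\<lambda>y. gauss 1 x * C * (1 + x^4) * gauss 1 y + gauss 1 x * C * (gauss 1 y * y^4))"
      using gi[of 4] gi0 by auto
    show "(\<lambda>y. gauss 1 x * gauss 1 y * w' s0 x y) \<in> borel_measurable lborel"
      by (rule borel_measurable_integrable[OF inner_int[OF pbw'[OF s0]]])
  qed
  have "((\<lambda>s. LINT x|lborel. LINT y|lborel. gauss 1 x * gauss 1 y * w s x y) has_real_derivative
      (LINT x|lborel. LINT y|lborel. gauss 1 x * gauss 1 y * w' t x y)) (at t)"
  proof (rule deriv_int[where d=d and w="\<lambda>x. gauss 1 x * C * (4 + x^4)"])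
    show "0 < d" by (rule d)
    show "integrable lborel (\<lambda>x. LINT y|lborel. gauss 1 x * gauss 1 y * w s x y)" for s
      by (rule outer_int[OF pbw])
    show "((\<lambda>s. LINT y|lborel. gauss 1 x * gauss 1 y * w s x y) has_real_derivative
      (LINT y|lborel. gauss 1 x * gauss 1 y * w' s x y)) (at s)" if "s \<in> ball t d" for s x
      by (rule inner[OF that])
    show "\<bar>LINT y|lborel. gauss 1 x * gauss 1 y * w' s x y\<bar> \<le> gauss 1 x * C * (4 + x^4)" if "s \<in> ball t d" for s x
      by (rule inner_bound[OF pbw'[OF that] bnd[OF that]])
    show "integrable lborel (\<lambda>x. gauss 1 x * C * (4 + x^4))" by (rule int_poly4x)
    show "(\<lambda>x. LINT y|lborel. gauss 1 x * gauss 1 y * w' t x y) \<in> borel_measurable lborel"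
      using inner_meas[OF pbw'] d by simp
  qed
  then show ?thesis by (simp add: D2_def)
qed

definition wP' where "wP' s x y = - cos (phi s x y) * sin (phi s x y) * sqrt (x\<^sup>2 + y\<^sup>2)"
definition wZ' where "wZ' s x y = s / 2 * snc (phi s x y) * cos (phi s x y) * x\<^sup>2"

lemma sqrt_le: "sqrt (x\<^sup>2 + y\<^sup>2) \<le> 1 + x\<^sup>2 + y\<^sup>2"
proof -
  have "sqrt (x\<^sup>2 + y\<^sup>2) \<le> 1 + (x\<^sup>2 + y\<^sup>2)"
  proof (cases "x\<^sup>2 + y\<^sup>2 \<le> 1")
    case True
    then have "sqrt (x\<^sup>2 + y\<^sup>2) \<le> 1" by simp
    then show ?thesis using zero_le_power2[of x] zero_le_power2[of y] by linarith
  next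
    case False
    then have "sqrt (x\<^sup>2 + y\<^sup>2) \<le> x\<^sup>2 + y\<^sup>2" by (intro real_sqrt_le_iff'[THEN iffD2]) (auto simp: power2_eq_square)
    then show ?thesis by simp
  qed
  then show ?thesis by simp
qed

lemma deriv_wP: "((\<lambda>s. wP s x y) has_real_derivative wP' s x y) (at s)"
  unfolding wP_def wP'_def phi_def
  by (auto intro!: derivative_eq_intros simp: power2_eq_square algebra_simps)

lemma q_deriv: "((\<lambda>s. s / 2 * snc (s * r / 2)) has_real_derivative cos (s * r / 2) / 2) (at s)"
proof (cases "r = 0")
  case True
  then show ?thesis by (auto intro!: derivative_eq_intros simp: snc_def)
next
  case False
  have e: "(\<lambda>s. s / 2 * snc (s * r / 2)) = (\<lambda>s. sin (s * r / 2) / r)"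
  proof
    fix s
    show "s / 2 * snc (s * r / 2) = sin (s * r / 2) / r"
      using False by (cases "s = 0") (auto simp: snc_def field_simps)
  qed
  show ?thesis unfolding e using False by (auto intro!: derivative_eq_intros simp: field_simps)
qed

lemma deriv_wZ: "((\<lambda>s. wZ s x y) has_real_derivative wZ' s x y) (at s)"
proof -
  let ?r = "sqrt (x\<^sup>2 + y\<^sup>2)"
  have e: "(\<lambda>s. wZ s x y) = (\<lambda>s. (s / 2 * snc (s * ?r / 2))\<^sup>2 * x\<^sup>2)"
    by (auto simp: wZ_def phi_def power_mult_distrib power_divide fun_eq_iff)
  have "((\<lambda>s. (s / 2 * snc (s * ?r / 2))\<^sup>2 * x\<^sup>2) has_real_derivative
      (of_nat 2 * ((cos (s * ?r / 2) / 2) * (s / 2 * snc (s * ?r / 2)) ^ (2 - Suc 0))) * x\<^sup>2) (at s)"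
    by (rule DERIV_cmult_right[OF DERIV_power[OF q_deriv]])
  moreover have "(of_nat 2 * ((cos (s * ?r / 2) / 2) * (s / 2 * snc (s * ?r / 2)) ^ (2 - Suc 0))) * x\<^sup>2 = wZ' s x y"
    by (simp add: wZ'_def phi_def)
  ultimately show ?thesis unfolding e by simp
qed

lemma bnd_wP': "\<bar>wP' s x y\<bar> \<le> 2 * (1 + x^4 + y^4)"
proof -
  have "\<bar>wP' s x y\<bar> = \<bar>cos (phi s x y)\<bar> * \<bar>sin (phi s x y)\<bar> * sqrt (x\<^sup>2 + y\<^sup>2)"
    by (simp add: wP'_def abs_mult)
  also have "\<dots> \<le> 1 * 1 * sqrt (x\<^sup>2 + y\<^sup>2)"
    by (intro mult_right_mono mult_mono) auto
  also have "\<dots> \<le> 1 + x\<^sup>2 + y\<^sup>2" using sqrt_le by simp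
  also have "\<dots> \<le> 2 * (1 + x^4 + y^4)" by (rule poly_le4)
  finally show ?thesis .
qed

lemma bnd_wZ':
  assumes "s \<in> ball (1/2) 1"
  shows "\<bar>wZ' s x y\<bar> \<le> 2 * (1 + x^4 + y^4)"
proof -
  have s: "\<bar>s\<bar> \<le> 2" using assms by (auto simp: dist_real_def)
  have "\<bar>wZ' s x y\<bar> = \<bar>s\<bar> / 2 * (\<bar>snc (phi s x y)\<bar> * \<bar>cos (phi s x y)\<bar>) * x\<^sup>2"
    by (simp add: wZ'_def abs_mult)
  also have "\<dots> \<le> 1 * (1 * 1) * x\<^sup>2"
    using s by (intro mult_right_mono mult_mono) (auto simp: snc_abs)
  also have "\<dots> \<le> 1 + x\<^sup>2 + y\<^sup>2" by simp
  also have "\<dots> \<le> 2 * (1 + x^4 + y^4)" by (rule poly_le4)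
  finally show ?thesis .
qed

lemma pb_wP': "pb (wP' s)"
proof (rule pb_intro4[where C=2])
  show "(\<lambda>p. wP' s (fst p) (snd p)) \<in> borel_measurable borel" unfolding wP'_def by (rule borel_prodI) measurable
  show "\<bar>wP' s x y\<bar> \<le> 2 * (1 + x^4 + y^4)" for x y by (rule bnd_wP')
qed

lemma pb_wZ': "pb (wZ' s)"
proof (rule pb_intro[where C="\<bar>s\<bar>/2"])
  show "(\<lambda>p. wZ' s (fst p) (snd p)) \<in> borel_measurable borel" unfolding wZ'_def by (rule borel_prodI) measurable
  fix x y :: real
  have "\<bar>wZ' s x y\<bar> = \<bar>s\<bar> / 2 * (\<bar>snc (phi s x y)\<bar> * \<bar>cos (phi s x y)\<bar>) * x\<^sup>2"
    by (simp add: wZ'_def abs_mult)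
  also have "\<dots> \<le> \<bar>s\<bar> / 2 * (1 * 1) * x\<^sup>2"
    by (intro mult_right_mono mult_left_mono mult_mono) (auto simp: snc_abs)
  also have "\<dots> \<le> \<bar>s\<bar> / 2 * (1 + x\<^sup>2 + y\<^sup>2)"
  proof -
    have "x\<^sup>2 \<le> 1 + x\<^sup>2 + y\<^sup>2" using zero_le_power2[of y] by linarith
    from mult_left_mono[OF this, of "\<bar>s\<bar> / 2"] show ?thesis by simp
  qed
  finally show "\<bar>wZ' s x y\<bar> \<le> \<bar>s\<bar> / 2 * (1 + x\<^sup>2 + y\<^sup>2)" .
qed

definition PP where "PP s = D2 (wP s)"
definition QA where "QA s = D2 (wZ s)"
definition QB where "QB s = D2 (wX s)"

lemma PP_deriv: "(PP has_real_derivative D2 (wP' (1/2))) (at (1/2))"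
  unfolding PP_def[abs_def]
  by (rule D2_deriv[where d=1 and C=2], simp, rule pb_wP, rule deriv_wP, rule pb_wP', rule bnd_wP')

lemma QA_deriv: "(QA has_real_derivative D2 (wZ' (1/2))) (at (1/2))"
  unfolding QA_def[abs_def]
  by (rule D2_deriv[where d=1 and C=2], simp, rule pb_wZ, rule deriv_wZ, rule pb_wZ', rule bnd_wZ', assumption)

lemma pb_add: assumes "pb u" "pb v" shows "pb (\<lambda>x y. u x y + v x y)"
proof -
  obtain C1 where C1: "\<And>x y. \<bar>u x y\<bar> \<le> C1 * (1 + x^4 + y^4)" using assms(1) by (auto simp: pb_def)
  obtain C2 where C2: "\<And>x y. \<bar>v x y\<bar> \<le> C2 * (1 + x^4 + y^4)" using assms(2) by (auto simp: pb_def)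
  have m1[measurable]: "(\<lambda>p. u (fst p) (snd p)) \<in> borel_measurable borel" using assms(1) by (simp add: pb_def)
  have m2[measurable]: "(\<lambda>p. v (fst p) (snd p)) \<in> borel_measurable borel" using assms(2) by (simp add: pb_def)
  show ?thesis
  proof (rule pb_intro4[where C="C1 + C2"])
    show "(\<lambda>p. u (fst p) (snd p) + v (fst p) (snd p)) \<in> borel_measurable borel" by measurable
    fix x y
    have "\<bar>u x y + v x y\<bar> \<le> \<bar>u x y\<bar> + \<bar>v x y\<bar>" by (rule abs_triangle_ineq)
    also have "\<dots> \<le> C1 * (1 + x^4 + y^4) + C2 * (1 + x^4 + y^4)" using C1 C2 by (rule add_mono)
    finally show "\<bar>u x y + v x y\<bar> \<le> (C1 + C2) * (1 + x^4 + y^4)" by (simp add: algebra_simps)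
  qed
qed

lemma pb_cmult: assumes "pb u" shows "pb (\<lambda>x y. c * u x y)"
proof -
  obtain C1 where C1: "\<And>x y. \<bar>u x y\<bar> \<le> C1 * (1 + x^4 + y^4)" using assms(1) by (auto simp: pb_def)
  have m1[measurable]: "(\<lambda>p. u (fst p) (snd p)) \<in> borel_measurable borel" using assms(1) by (simp add: pb_def)
  show ?thesis
  proof (rule pb_intro4[where C="\<bar>c\<bar> * C1"])
    show "(\<lambda>p. c * u (fst p) (snd p)) \<in> borel_measurable borel" by measurable
    fix x y
    have "\<bar>c * u x y\<bar> = \<bar>c\<bar> * \<bar>u x y\<bar>" by (simp add: abs_mult)
    also have "\<dots> \<le> \<bar>c\<bar> * (C1 * (1 + x^4 + y^4))" using C1 by (intro mult_left_mono) auto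
    finally show "\<bar>c * u x y\<bar> \<le> (\<bar>c\<bar> * C1) * (1 + x^4 + y^4)" by (simp add: algebra_simps)
  qed
qed

lemma pb_x2: "pb (\<lambda>x y. x\<^sup>2)"
proof (rule pb_intro[where C=1])
  show "(\<lambda>p::real\<times>real. (fst p)\<^sup>2) \<in> borel_measurable borel" by (rule borel_prodI) measurable
  show "\<bar>x\<^sup>2\<bar> \<le> 1 * (1 + x\<^sup>2 + y\<^sup>2)" for x y :: real using zero_le_power2[of y] by simp
qed

lemma pb_y2: "pb (\<lambda>x y. y\<^sup>2)"
proof (rule pb_intro[where C=1])
  show "(\<lambda>p::real\<times>real. (snd p)\<^sup>2) \<in> borel_measurable borel" by (rule borel_prodI) measurable
  show "\<bar>y\<^sup>2\<bar> \<le> 1 * (1 + x\<^sup>2 + y\<^sup>2)" for x y :: real using zero_le_power2[of x] by simp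
qed

lemma pb_x4: "pb (\<lambda>x y. x^4)"
proof (rule pb_intro4[where C=1])
  show "(\<lambda>p::real\<times>real. (fst p)^4) \<in> borel_measurable borel" by (rule borel_prodI) measurable
  show "\<bar>x^4\<bar> \<le> 1 * (1 + x^4 + y^4)" for x y :: real using pow4_nonneg[of x] pow4_nonneg[of y] by simp
qed

lemma pb_y4: "pb (\<lambda>x y. y^4)"
proof (rule pb_intro4[where C=1])
  show "(\<lambda>p::real\<times>real. (snd p)^4) \<in> borel_measurable borel" by (rule borel_prodI) measurable
  show "\<bar>y^4\<bar> \<le> 1 * (1 + x^4 + y^4)" for x y :: real using pow4_nonneg[of x] pow4_nonneg[of y] by simp
qed

lemma pb_1: "pb (\<lambda>x y. 1)"
proof (rule pb_intro4[where C=1])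
  show "(\<lambda>p. 1::real) \<in> borel_measurable borel" by measurable
  show "\<bar>1::real\<bar> \<le> 1 * (1 + x^4 + y^4)" for x y :: real using pow4_nonneg[of x] pow4_nonneg[of y] by simp
qed

lemma D2_sep:
  assumes "integrable lborel (\<lambda>x. gauss 1 x * p x)" "integrable lborel (\<lambda>y. gauss 1 y * q y)"
  shows "D2 (\<lambda>x y. p x * q y) = (LINT x|lborel. gauss 1 x * p x) * (LINT y|lborel. gauss 1 y * q y)"
proof -
  have "(LINT y|lborel. gauss 1 x * gauss 1 y * (p x * q y)) = (gauss 1 x * p x) * (LINT y|lborel. gauss 1 y * q y)" for x
  proof -
    have "(LINT y|lborel. gauss 1 x * gauss 1 y * (p x * q y)) = (LINT y|lborel. (gauss 1 x * p x) * (gauss 1 y * q y))"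
      by (simp add: mult_ac)
    also have "\<dots> = (gauss 1 x * p x) * (LINT y|lborel. gauss 1 y * q y)" by simp
    finally show ?thesis .
  qed
  then show ?thesis unfolding D2_def by simp
qed

lemma D2_x2: "D2 (\<lambda>x y. x\<^sup>2) = 1"
  using D2_sep[of "\<lambda>x. x\<^sup>2" "\<lambda>y. 1"] gi[of 2] gi0 E0 E2 by simp
lemma D2_y2: "D2 (\<lambda>x y. y\<^sup>2) = 1"
  using D2_sep[of "\<lambda>x. 1" "\<lambda>y. y\<^sup>2"] gi[of 2] gi0 E0 E2 by simp
lemma D2_x4: "D2 (\<lambda>x y. x^4) = 3"
  using D2_sep[of "\<lambda>x. x^4" "\<lambda>y. 1"] gi[of 4] gi0 E0 E4 by simp
lemma D2_y4: "D2 (\<lambda>x y. y^4) = 3"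
  using D2_sep[of "\<lambda>x. 1" "\<lambda>y. y^4"] gi[of 4] gi0 E0 E4 by simp
lemma D2_1: "D2 (\<lambda>x y. 1) = 1"
  using D2_sep[of "\<lambda>x. 1" "\<lambda>y. 1"] gi0 E0 by simp

lemma D2_mono:
  assumes "pb u" "pb v" "\<And>x y. u x y \<le> v x y"
  shows "D2 u \<le> D2 v"
  unfolding D2_def
proof (rule integral_mono)
  show "integrable lborel (\<lambda>x. LINT y|lborel. gauss 1 x * gauss 1 y * u x y)" by (rule outer_int[OF assms(1)])
  show "integrable lborel (\<lambda>x. LINT y|lborel. gauss 1 x * gauss 1 y * v x y)" by (rule outer_int[OF assms(2)])
  fix x
  show "(LINT y|lborel. gauss 1 x * gauss 1 y * u x y) \<le> (LINT y|lborel. gauss 1 x * gauss 1 y * v x y)"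
  proof (rule integral_mono)
    show "integrable lborel (\<lambda>y. gauss 1 x * gauss 1 y * u x y)" by (rule inner_int[OF assms(1)])
    show "integrable lborel (\<lambda>y. gauss 1 x * gauss 1 y * v x y)" by (rule inner_int[OF assms(2)])
    fix y
    have "0 \<le> gauss 1 x * gauss 1 y" using gauss_nonneg by simp
    with assms(3)[of x y] show "gauss 1 x * gauss 1 y * u x y \<le> gauss 1 x * gauss 1 y * v x y"
      by (rule mult_left_mono)
  qed
qed

lemma D2_cong: "(\<And>x y. u x y = v x y) \<Longrightarrow> D2 u = D2 v"
  by (simp add: D2_def)

lemma phi_sq: "(phi s x y)\<^sup>2 = s\<^sup>2 * (x\<^sup>2 + y\<^sup>2) / 4"
  by (simp add: phi_def power_mult_distrib power_divide)

lemma sum_ZX: "wZ s x y + wX s x y = (sin (phi s x y))\<^sup>2"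
proof -
  have "wZ s x y + wX s x y = (phi s x y)\<^sup>2 * (snc (phi s x y))\<^sup>2"
    unfolding wZ_def wX_def phi_sq by (simp add: algebra_simps)
  also have "\<dots> = (sin (phi s x y))\<^sup>2"
    by (simp add: power_mult_distrib[symmetric] snc_mult)
  finally show ?thesis .
qed

lemma sum_PZX: "wP s x y + wZ s x y + wX s x y = 1"
  using sum_ZX[of s x y] sin_cos_squared_add[of "phi s x y"] unfolding wP_def by linarith

lemma PQQ: "PP s + QA s + QB s = 1"
proof -
  have "PP s + QA s + QB s = D2 (\<lambda>x y. wP s x y + wZ s x y + wX s x y)"
    unfolding PP_def QA_def QB_def
    by (simp add: D2_add pb_add pb_wP pb_wZ pb_wX)
  also have "\<dots> = D2 (\<lambda>x y. 1)" by (rule D2_cong) (rule sum_PZX)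
  finally show ?thesis by (simp add: D2_1)
qed

lemma QA_le: "QA (1/2) \<le> 1/16"
proof -
  have "QA (1/2) \<le> D2 (\<lambda>x y. (1/16) * x\<^sup>2)"
    unfolding QA_def
  proof (rule D2_mono[OF pb_wZ pb_cmult[OF pb_x2]])
    fix x y
    have "(snc (phi (1/2) x y))\<^sup>2 \<le> 1" using snc_abs by (simp add: abs_square_le_1)
    then have "(snc (phi (1/2) x y))\<^sup>2 * x\<^sup>2 \<le> x\<^sup>2" by (intro mult_left_le_one_le) auto
    then show "wZ (1/2) x y \<le> 1/16 * x\<^sup>2" unfolding wZ_def by (simp add: power_divide)
  qed
  also have "\<dots> = 1/16" by (simp only: D2_cmult D2_x2)
  finally show ?thesis .
qed

lemma QB_le: "QB (1/2) \<le> 1/16"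
proof -
  have "QB (1/2) \<le> D2 (\<lambda>x y. (1/16) * y\<^sup>2)"
    unfolding QB_def
  proof (rule D2_mono[OF pb_wX pb_cmult[OF pb_y2]])
    fix x y
    have "(snc (phi (1/2) x y))\<^sup>2 \<le> 1" using snc_abs by (simp add: abs_square_le_1)
    then have "(snc (phi (1/2) x y))\<^sup>2 * y\<^sup>2 \<le> y\<^sup>2" by (intro mult_left_le_one_le) auto
    then show "wX (1/2) x y \<le> 1/16 * y\<^sup>2" unfolding wX_def by (simp add: power_divide)
  qed
  also have "\<dots> = 1/16" by (simp only: D2_cmult D2_y2)
  finally show ?thesis .
qed

lemma sin3: fixes z :: real shows "\<bar>sin z - z\<bar> \<le> \<bar>z\<bar> ^ 3 / 6"
proof -
  have s: "(\<Sum>m<3. sin_coeff m * z ^ m) = z"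
    by (simp add: numeral_3_eq_3 sin_coeff_def)
  have f3: "fact 3 = (6::real)" by (simp add: numeral_3_eq_3)
  have f: "inverse (fact 3) * \<bar>z\<bar> ^ 3 = \<bar>z\<bar> ^ 3 / (6::real)"
    unfolding f3 by (simp add: field_simps)
  show ?thesis using Maclaurin_sin_bound[of z 3] unfolding s f .
qed

lemma sin_sq_lower: "(z::real)\<^sup>2 - z^4 / 3 \<le> (sin z)\<^sup>2"
proof -
  define a where "a = \<bar>z\<bar>"
  have a0: "0 \<le> a" by (simp add: a_def)
  have z2: "z\<^sup>2 = a\<^sup>2" by (simp add: a_def)
  have z4: "z^4 = (a\<^sup>2)\<^sup>2" by (simp add: a_def power_abs[symmetric] power_mult[symmetric])
  have a3: "a ^ 3 = a * a\<^sup>2" by (simp add: power2_eq_square power3_eq_cube)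
  have sa: "a - a * a\<^sup>2 / 6 \<le> \<bar>sin z\<bar>"
    using sin3[of z] abs_triangle_ineq2[of z "sin z"] unfolding a_def[symmetric] a3 by (simp add: abs_minus_commute)
  define A where "A = a\<^sup>2"
  have A0: "0 \<le> A" by (simp add: A_def)
  show ?thesis
  proof (cases "0 \<le> a - a * A / 6")
    case True
    have "(a - a * A / 6)\<^sup>2 \<le> (\<bar>sin z\<bar>)\<^sup>2"
      using True sa unfolding A_def by (intro power_mono) auto
    moreover have "(a - a * A / 6)\<^sup>2 = A - A\<^sup>2 / 3 + A * A\<^sup>2 / 36"
      unfolding A_def by (simp add: power2_eq_square field_simps)
    moreover have "0 \<le> A * A\<^sup>2 / 36" using A0 by simp
    ultimately have "A - A\<^sup>2 / 3 \<le> (sin z)\<^sup>2" by simp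
    then show ?thesis unfolding z2 z4 A_def .
  next
    case False
    then have "a * (1 - A / 6) < 0" by (simp add: algebra_simps)
    then have "1 - A / 6 < 0" using a0 by (simp add: mult_less_0_iff)
    then have "6 < A" by simp
    then have "A - A\<^sup>2 / 3 < 0" by (simp add: power2_eq_square field_simps)
    moreover have "0 \<le> (sin z)\<^sup>2" by simp
    ultimately show ?thesis unfolding z2 z4 A_def by linarith
  qed
qed

lemma QAB_pos: "0 < QA (1/2) + QB (1/2)"
proof -
  let ?h = "\<lambda>x y. (1/16) * x\<^sup>2 + (1/16) * y\<^sup>2 + ((-1/384) * x^4 + (-1/384) * y^4)"
  note pA = pb_add[OF pb_cmult[OF pb_x2, of "1/16"] pb_cmult[OF pb_y2, of "1/16"]]
  note pB = pb_add[OF pb_cmult[OF pb_x4, of "-1/384"] pb_cmult[OF pb_y4, of "-1/384"]]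
  have pbh: "pb ?h" by (rule pb_add[OF pA pB])
  have Dh: "D2 ?h = 7/64"
  proof -
    have "D2 ?h = D2 (\<lambda>x y. (1/16) * x\<^sup>2 + (1/16) * y\<^sup>2) + D2 (\<lambda>x y. (-1/384) * x^4 + (-1/384) * y^4)"
      by (rule D2_add[OF pA pB])
    also have "D2 (\<lambda>x y. (1/16) * x\<^sup>2 + (1/16) * y\<^sup>2) = (1/16) * D2 (\<lambda>x y. x\<^sup>2) + (1/16) * D2 (\<lambda>x y. y\<^sup>2)"
      by (simp only: D2_add[OF pb_cmult[OF pb_x2] pb_cmult[OF pb_y2]] D2_cmult)
    also have "D2 (\<lambda>x y. (-1/384) * x^4 + (-1/384) * y^4) = (-1/384) * D2 (\<lambda>x y. x^4) + (-1/384) * D2 (\<lambda>x y. y^4)"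
      by (simp only: D2_add[OF pb_cmult[OF pb_x4] pb_cmult[OF pb_y4]] D2_cmult)
    finally show ?thesis by (simp add: D2_x2 D2_y2 D2_x4 D2_y4)
  qed
  have "D2 ?h \<le> D2 (\<lambda>x y. wZ (1/2) x y + wX (1/2) x y)"
  proof (rule D2_mono[OF pbh pb_add[OF pb_wZ pb_wX]])
    fix x y :: real
    let ?p = "phi (1/2) x y"
    have p2: "?p\<^sup>2 = (x\<^sup>2 + y\<^sup>2) / 16" unfolding phi_sq by (simp add: power_divide)
    have p4: "?p^4 = (?p\<^sup>2)\<^sup>2" by (simp only: power_mult[symmetric]) simp
    have x4: "x^4 = (x\<^sup>2)\<^sup>2" and y4: "y^4 = (y\<^sup>2)\<^sup>2" by (simp only: power_mult[symmetric], simp)+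
    have ab: "(a + b)\<^sup>2 \<le> 2 * (a\<^sup>2 + b\<^sup>2)" for a b :: real
    proof -
      have "0 \<le> (a - b)\<^sup>2" by simp
      then show ?thesis unfolding power2_sum power2_diff distrib_left by linarith
    qed
    have sq: "(x\<^sup>2 + y\<^sup>2)\<^sup>2 \<le> 2 * (x^4 + y^4)" unfolding x4 y4 by (rule ab)
    have aux: "S\<^sup>2 \<le> 2 * Q \<Longrightarrow> S / 16 - Q / 384 \<le> S / 16 - (S / 16)\<^sup>2 / 3" for S Q :: real
      by (simp add: power_divide)
    have hx: "?h x y = (x\<^sup>2 + y\<^sup>2) / 16 - (x^4 + y^4) / 384" by (simp add: field_simps)
    have "?h x y \<le> ?p\<^sup>2 - ?p^4 / 3"
      unfolding hx p4 p2 by (rule aux[OF sq])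
    also have "\<dots> \<le> (sin ?p)\<^sup>2" by (rule sin_sq_lower)
    also have "\<dots> = wZ (1/2) x y + wX (1/2) x y" by (simp add: sum_ZX)
    finally show "?h x y \<le> wZ (1/2) x y + wX (1/2) x y" .
  qed
  also have "\<dots> = QA (1/2) + QB (1/2)" unfolding QA_def QB_def by (rule D2_add[OF pb_wZ pb_wX])
  finally show ?thesis using Dh by simp
qed

lemma ee_pos: "0 < ee s" by (simp add: ee_def)

lemma ee_deriv: "(ee has_real_derivative (- s * ee s)) (at s)"
  unfolding ee_def[abs_def] by (auto intro!: derivative_eq_intros simp: power2_eq_square)

lemma L12: "Lam12 1 1 1 1 = (\<lambda>s. Dm (PP s) (QA s) (QB s))"
  by (intro ext) (simp add: Lam12_formula2 Dm_def PP_def QA_def QB_def)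

lemma L1: "Lam1 1 1 = (\<lambda>s. Dm ((1 + ee s) / 2) ((1 - ee s) / 2) 0)"
  by (intro ext) (simp add: Lam1_formula Dm_def)

lemma L2: "Lam2 1 1 = (\<lambda>s. Dm ((1 + ee s) / 2) 0 ((1 - ee s) / 2))"
  by (intro ext) (simp add: Lam2_formula Dm_def)

lemma QB_eq: "QB = (\<lambda>s. 1 - PP s - QA s)"
  using PQQ by (auto simp: fun_eq_iff algebra_simps)

definition Pd where "Pd = D2 (wP' (1/2))"
definition Qad where "Qad = D2 (wZ' (1/2))"

lemma dP: "(PP has_real_derivative Pd) (at (1/2))" unfolding Pd_def by (rule PP_deriv)
lemma dQA: "(QA has_real_derivative Qad) (at (1/2))" unfolding Qad_def by (rule QA_deriv)
lemma dQB: "(QB has_real_derivative (- Pd - Qad)) (at (1/2))"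
  unfolding QB_eq using dP dQA by (auto intro!: derivative_eq_intros)

lemma dhalf1: "((\<lambda>s. (1 + ee s) / 2) has_real_derivative (- t * ee t) / 2) (at t)"
  using ee_deriv[of t] by (auto intro!: derivative_eq_intros)
lemma dhalf2: "((\<lambda>s. (1 - ee s) / 2) has_real_derivative (- (- t * ee t)) / 2) (at t)"
  using ee_deriv[of t] by (auto intro!: derivative_eq_intros)
lemma dzero: "((\<lambda>s. 0::real) has_real_derivative 0) (at t)"
  by (rule DERIV_const)

lemma bounds: "QA (1/2) \<le> 1/16" "QB (1/2) \<le> 1/16" "PP (1/2) = 1 - QA (1/2) - QB (1/2)"
  using QA_le QB_le PQQ[of "1/2"] by auto

lemma reg12: "regular_at (Lam12 1 1 1 1) (1/2)"
proof -
  let ?a = "QA (1/2)" and ?b = "QB (1/2)" and ?P = "PP (1/2)"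
  have e1: "(?P + ?a)\<^sup>2 - ?b\<^sup>2 = 1 - 2 * ?b"
    unfolding bounds(3) by (simp add: power2_eq_square algebra_simps)
  have e2: "(?P - ?a)\<^sup>2 - ?b\<^sup>2 = (1 - 2 * ?a - 2 * ?b) * (1 - 2 * ?a)"
    unfolding bounds(3) by (simp add: power2_eq_square algebra_simps)
  have p1: "0 < 1 - 2 * ?b" using bounds by linarith
  have p2: "0 < (1 - 2 * ?a - 2 * ?b) * (1 - 2 * ?a)"
    using bounds by (intro mult_pos_pos) linarith+
  show ?thesis unfolding L12
    by (rule regular_Dm[OF dP dQA dQB]) (use e1 e2 p1 p2 in auto)
qed

lemma reg1: "regular_at (Lam1 1 1) t"
proof -
  have "regular_at (\<lambda>s. Dm ((\<lambda>s. (1 + ee s) / 2) s) ((\<lambda>s. (1 - ee s) / 2) s) ((\<lambda>s. 0) s)) t"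
  proof (rule regular_Dm[OF dhalf1 dhalf2 dzero])
    show "((1 + ee t) / 2 + (1 - ee t) / 2)\<^sup>2 - 0\<^sup>2 \<noteq> 0" by (simp add: field_simps)
    show "((1 + ee t) / 2 - (1 - ee t) / 2)\<^sup>2 - 0\<^sup>2 \<noteq> 0" using ee_pos[of t] by (simp add: field_simps)
  qed
  then show ?thesis unfolding L1 by simp
qed

lemma reg2: "regular_at (Lam2 1 1) t"
proof -
  have "regular_at (\<lambda>s. Dm ((\<lambda>s. (1 + ee s) / 2) s) ((\<lambda>s. 0) s) ((\<lambda>s. (1 - ee s) / 2) s)) t"
  proof (rule regular_Dm[OF dhalf1 dzero dhalf2])
    have "((1 + ee t) / 2)\<^sup>2 - ((1 - ee t) / 2)\<^sup>2 = ee t" by (simp add: power2_eq_square field_simps)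
    then show "((1 + ee t) / 2 + 0)\<^sup>2 - ((1 - ee t) / 2)\<^sup>2 \<noteq> 0"
      and "((1 + ee t) / 2 - 0)\<^sup>2 - ((1 - ee t) / 2)\<^sup>2 \<noteq> 0" using ee_pos[of t] by auto
  qed
  then show ?thesis unfolding L2 by simp
qed

lemma bij_of_reg: "regular_at \<Lambda> t \<Longrightarrow> bij (\<Lambda> t)" by (simp add: regular_at_def)

lemma g1x: "generator (Lam1 1 1) t sigma_x = (- t) *\<^sub>R sigma_x"
proof -
  have "generator (Lam1 1 1) t sigma_x = ((- t * ee t) / ee t) *\<^sub>R sigma_x"
  proof (rule gen_eig[where l=ee])
    show "bij (Lam1 1 1 t)" by (rule bij_of_reg[OF reg1])
    show "(ee has_real_derivative (- t * ee t)) (at t)" by (rule ee_deriv)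
    show "Lam1 1 1 s (k *\<^sub>R sigma_x) = (k * ee s) *\<^sub>R sigma_x" for s k
      unfolding L1 by (simp add: Dm_scale Dm_x field_simps)
    show "ee t \<noteq> 0" using ee_pos[of t] by simp
  qed
  then show ?thesis using ee_pos[of t] by simp
qed

lemma g1y: "generator (Lam1 1 1) t sigma_y = (- t) *\<^sub>R sigma_y"
proof -
  have "generator (Lam1 1 1) t sigma_y = ((- t * ee t) / ee t) *\<^sub>R sigma_y"
  proof (rule gen_eig[where l=ee])
    show "bij (Lam1 1 1 t)" by (rule bij_of_reg[OF reg1])
    show "(ee has_real_derivative (- t * ee t)) (at t)" by (rule ee_deriv)
    show "Lam1 1 1 s (k *\<^sub>R sigma_y) = (k * ee s) *\<^sub>R sigma_y" for s k
      unfolding L1 by (simp add: Dm_scale Dm_y field_simps)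
    show "ee t \<noteq> 0" using ee_pos[of t] by simp
  qed
  then show ?thesis using ee_pos[of t] by simp
qed

lemma g1z: "generator (Lam1 1 1) t sigma_z = 0"
proof -
  have "generator (Lam1 1 1) t sigma_z = (0 / 1) *\<^sub>R sigma_z"
  proof (rule gen_eig[where l="\<lambda>s. 1"])
    show "bij (Lam1 1 1 t)" by (rule bij_of_reg[OF reg1])
    show "((\<lambda>s. 1) has_real_derivative 0) (at t)" by (rule DERIV_const)
    show "Lam1 1 1 s (k *\<^sub>R sigma_z) = (k * 1) *\<^sub>R sigma_z" for s k
      unfolding L1 by (simp add: Dm_scale Dm_z field_simps)
  qed simp
  then show ?thesis by simp
qed

lemma g2x: "generator (Lam2 1 1) t sigma_x = 0"
proof -
  have "generator (Lam2 1 1) t sigma_x = (0 / 1) *\<^sub>R sigma_x"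
  proof (rule gen_eig[where l="\<lambda>s. 1"])
    show "bij (Lam2 1 1 t)" by (rule bij_of_reg[OF reg2])
    show "((\<lambda>s. 1) has_real_derivative 0) (at t)" by (rule DERIV_const)
    show "Lam2 1 1 s (k *\<^sub>R sigma_x) = (k * 1) *\<^sub>R sigma_x" for s k
      unfolding L2 by (simp add: Dm_scale Dm_x field_simps)
  qed simp
  then show ?thesis by simp
qed

lemma g2y: "generator (Lam2 1 1) t sigma_y = (- t) *\<^sub>R sigma_y"
proof -
  have "generator (Lam2 1 1) t sigma_y = ((- t * ee t) / ee t) *\<^sub>R sigma_y"
  proof (rule gen_eig[where l=ee])
    show "bij (Lam2 1 1 t)" by (rule bij_of_reg[OF reg2])
    show "(ee has_real_derivative (- t * ee t)) (at t)" by (rule ee_deriv)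
    show "Lam2 1 1 s (k *\<^sub>R sigma_y) = (k * ee s) *\<^sub>R sigma_y" for s k
      unfolding L2 by (simp add: Dm_scale Dm_y field_simps)
    show "ee t \<noteq> 0" using ee_pos[of t] by simp
  qed
  then show ?thesis using ee_pos[of t] by simp
qed

lemma g2z: "generator (Lam2 1 1) t sigma_z = (- t) *\<^sub>R sigma_z"
proof -
  have "generator (Lam2 1 1) t sigma_z = ((- t * ee t) / ee t) *\<^sub>R sigma_z"
  proof (rule gen_eig[where l=ee])
    show "bij (Lam2 1 1 t)" by (rule bij_of_reg[OF reg2])
    show "(ee has_real_derivative (- t * ee t)) (at t)" by (rule ee_deriv)
    show "Lam2 1 1 s (k *\<^sub>R sigma_z) = (k * ee s) *\<^sub>R sigma_z" for s k
      unfolding L2 by (simp add: Dm_scale Dm_z field_simps)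
    show "ee t \<noteq> 0" using ee_pos[of t] by simp
  qed
  then show ?thesis using ee_pos[of t] by simp
qed

lemma bij12: "bij (Lam12 1 1 1 1 (1/2))" by (rule bij_of_reg[OF reg12])

lemma g12x: "generator (Lam12 1 1 1 1) (1/2) sigma_x =
   ((Pd - Qad + (- Pd - Qad)) / (PP (1/2) - QA (1/2) + QB (1/2))) *\<^sub>R sigma_x"
proof (rule gen_eig[where l="\<lambda>s. PP s - QA s + QB s"])
  show "bij (Lam12 1 1 1 1 (1/2))" by (rule bij12)
  show "Lam12 1 1 1 1 s (k *\<^sub>R sigma_x) = (k * (PP s - QA s + QB s)) *\<^sub>R sigma_x" for s k
    unfolding L12 by (simp add: Dm_scale Dm_x)
  show "PP (1/2) - QA (1/2) + QB (1/2) \<noteq> 0" using bounds by linarith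
  show "((\<lambda>s. PP s - QA s + QB s) has_real_derivative (Pd - Qad + (- Pd - Qad))) (at (1/2))"
    by (intro DERIV_add DERIV_diff dP dQA dQB)
qed

lemma g12y: "generator (Lam12 1 1 1 1) (1/2) sigma_y =
   ((Pd - Qad - (- Pd - Qad)) / (PP (1/2) - QA (1/2) - QB (1/2))) *\<^sub>R sigma_y"
proof (rule gen_eig[where l="\<lambda>s. PP s - QA s - QB s"])
  show "bij (Lam12 1 1 1 1 (1/2))" by (rule bij12)
  show "Lam12 1 1 1 1 s (k *\<^sub>R sigma_y) = (k * (PP s - QA s - QB s)) *\<^sub>R sigma_y" for s k
    unfolding L12 by (simp add: Dm_scale Dm_y)
  show "PP (1/2) - QA (1/2) - QB (1/2) \<noteq> 0" using bounds by linarith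
  show "((\<lambda>s. PP s - QA s - QB s) has_real_derivative (Pd - Qad - (- Pd - Qad))) (at (1/2))"
    by (intro DERIV_add DERIV_diff dP dQA dQB)
qed

lemma g12z: "generator (Lam12 1 1 1 1) (1/2) sigma_z =
   ((Pd + Qad - (- Pd - Qad)) / (PP (1/2) + QA (1/2) - QB (1/2))) *\<^sub>R sigma_z"
proof (rule gen_eig[where l="\<lambda>s. PP s + QA s - QB s"])
  show "bij (Lam12 1 1 1 1 (1/2))" by (rule bij12)
  show "Lam12 1 1 1 1 s (k *\<^sub>R sigma_z) = (k * (PP s + QA s - QB s)) *\<^sub>R sigma_z" for s k
    unfolding L12 by (simp add: Dm_scale Dm_z)
  show "PP (1/2) + QA (1/2) - QB (1/2) \<noteq> 0" using bounds by linarith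
  show "((\<lambda>s. PP s + QA s - QB s) has_real_derivative (Pd + Qad - (- Pd - Qad))) (at (1/2))"
    by (intro DERIV_add DERIV_diff dP dQA dQB)
qed

lemma gen_ne: "generator (Lam12 1 1 1 1) (1/2) \<noteq>
      (\<lambda>\<rho>. generator (Lam1 1 1) (1/2) \<rho> + generator (Lam2 1 1) (1/2) \<rho>)"
proof
  assume G: "generator (Lam12 1 1 1 1) (1/2) =
      (\<lambda>\<rho>. generator (Lam1 1 1) (1/2) \<rho> + generator (Lam2 1 1) (1/2) \<rho>)"
  let ?a = "QA (1/2)" and ?b = "QB (1/2)" and ?P = "PP (1/2)"
  have Ex: "((Pd - Qad + (- Pd - Qad)) / (?P - ?a + ?b)) *\<^sub>R sigma_x = (- (1/2) + 0) *\<^sub>R sigma_x"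
    using fun_cong[OF G, of sigma_x] unfolding g12x g1x g2x by (simp add: scaleR_left_distrib)
  have Ey: "((Pd - Qad - (- Pd - Qad)) / (?P - ?a - ?b)) *\<^sub>R sigma_y = (- (1/2) + - (1/2)) *\<^sub>R sigma_y"
    using fun_cong[OF G, of sigma_y] unfolding g12y g1y g2y by (simp add: scaleR_left_distrib)
  have Ez: "((Pd + Qad - (- Pd - Qad)) / (?P + ?a - ?b)) *\<^sub>R sigma_z = (0 + - (1/2)) *\<^sub>R sigma_z"
    using fun_cong[OF G, of sigma_z] unfolding g12z g1z g2z by (simp add: scaleR_left_distrib)
  have ex: "(Pd - Qad + (- Pd - Qad)) / (?P - ?a + ?b) = - (1/2) + 0"
    using Ex nz(1) by (simp only: scaleR_cancel_right) simp
  have ey: "(Pd - Qad - (- Pd - Qad)) / (?P - ?a - ?b) = - (1/2) + - (1/2)"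
    using Ey nz(2) by (simp only: scaleR_cancel_right) simp
  have ez: "(Pd + Qad - (- Pd - Qad)) / (?P + ?a - ?b) = 0 + - (1/2)"
    using Ez nz(3) by (simp only: scaleR_cancel_right) simp
  have dx: "?P - ?a + ?b = 1 - 2 * ?a" and dy: "?P - ?a - ?b = 1 - 2 * ?a - 2 * ?b"
    and dz: "?P + ?a - ?b = 1 - 2 * ?b" using bounds(3) by simp_all
  have nx: "1 - 2 * ?a \<noteq> 0" and ny: "1 - 2 * ?a - 2 * ?b \<noteq> 0" and nz': "1 - 2 * ?b \<noteq> 0"
    using bounds(1,2) by linarith+
  have x1: "- 2 * Qad = - (1/2) * (1 - 2 * ?a)"
    using ex unfolding dx using nx by (simp add: divide_eq_eq)
  have y1: "2 * Pd = - 1 * (1 - 2 * ?a - 2 * ?b)"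
    using ey unfolding dy using ny by (simp add: divide_eq_eq)
  have z1: "2 * Pd + 2 * Qad = - (1/2) * (1 - 2 * ?b)"
    using ez unfolding dz using nz' by (simp add: divide_eq_eq)
  have "?a + ?b = 0" using x1 y1 z1 by (simp add: algebra_simps)
  then show False using QAB_pos by simp
qed

theorem mainTheorem7:
  shows "\<exists>g1 g2 s1 s2 t. g1 > 0 \<and> g2 > 0 \<and> s1 > 0 \<and> s2 > 0 \<and> t > 0 \<and>
    regular_at (Lam12 g1 g2 s1 s2) t \<and> regular_at (Lam1 g1 s1) t \<and> regular_at (Lam2 g2 s2) t \<and>
    generator (Lam12 g1 g2 s1 s2) t \<noteq>
      (\<lambda>\<rho>. generator (Lam1 g1 s1) t \<rho> + generator (Lam2 g2 s2) t \<rho>)"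
  apply (rule exI[where x=1], rule exI[where x=1], rule exI[where x=1], rule exI[where x=1], rule exI[where x="1/2"])
  using reg12 reg1[of "1/2"] reg2[of "1/2"] gen_ne by simp

end
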